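(* Let $Y$ be an asymptotic-subsequential-$c_0$ Banach space. Then there is no sequence of maps $f_k:([\mathbb N]^k,d^{(k)}_{\mathsf H})\to Y$, $k\in\mathbb N$, forming a sequence of equi-coarse embeddings, such that for every $k$ there is a normalized weakly null array $(y^{(i)}_j:1\le i\le k,\ j\in\mathbb N)$ in $Y$ with $f_k(\bar m)=\sum_{i=1}^ky^{(i)}_{m_i}$ for all $\bar m=\{m_1<m_2<\dots<m_k\}\in[\mathbb N]^k$.
   Context: $d^{(k)}_{\mathsf H}(\bar m,\bar n)=|\{j:m_j\ne n_j\}|$. Maps $f_k$ are equi-coarse embeddings if there are non-decreasing $\rho,\omega:[0,\infty)\to[0,\infty)$, $\rho(t)\to\infty$, with $\rho(d(x,y))\le\|f_k(x)-f_k(y)\|\le\omega(d(x,y))$ for all $k,x,y$. A normalized weakly null array of height $k$: unit vectors $y^{(i)}_j$ with each row $(y^{(i)}_j)_j$ weakly null. Finite basic sequences are $C$-equivalent if $\frac1A\|\sum a_ix_i\|\le\|\sum a_iy_i\|\le B\|\sum a_ix_i\|$ with $AB\le C$. $\{Y\}_N$ is the set of norms $E$ on $\mathbb R^N$ with normalized monotone unit vector basis $(e_j)$ such that for every $\varepsilon>0$, for every closed finite-codimensional $Y_1$ there is $x_1\in S_{Y_1}$, ..., for every closed finite-codimensional $Y_N$ there is $x_N\in S_{Y_N}$ with $(x_j)$ $(1+\varepsilon)$-equivalent to $(e_j)$. An infinite dimensional $Y$ is asymptotic-subsequential-$c_0$ if there is $C\ge1$ such that for every $n$ there is $N$ such that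 for every $E\in\{Y\}_N$ there are $i_1<\dots<i_n$ with $(e_{i_k})_{k=1}^n$ $C$-equivalent to the unit vector basis of $\ell_\infty^n$. *)

theory Defs
  imports "HOL-Analysis.Analysis"
begin

definition elem_of :: "nat set \<Rightarrow> nat \<Rightarrow> nat" where
  "elem_of A j = sorted_list_of_set A ! j"

definition ksubsets :: "nat \<Rightarrow> nat set set" where
  "ksubsets k = {A. finite A \<and> card A = k}"

definition hamming_dist :: "nat \<Rightarrow> nat set \<Rightarrow> nat set \<Rightarrow> nat" where
  "hamming_dist k A B = card {j. j < k \<and> elem_of A j \<noteq> elem_of B j}"

definition equi_coarse_embeddings :: "(nat \<Rightarrow> nat set \<Rightarrow> 'a::real_normed_vector) \<Rightarrow> bool" where
  "equi_coarse_embeddings f \<longleftrightarrow>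
     (\<exists>\<rho> \<omega> :: real \<Rightarrow> real.
        mono_on {0..} \<rho> \<and> mono_on {0..} \<omega> \<and>
        (\<forall>t\<ge>0. \<rho> t \<ge> 0 \<and> \<omega> t \<ge> 0) \<and>
        filterlim \<rho> at_top at_top \<and>
        (\<forall>k\<ge>1. \<forall>A\<in>ksubsets k. \<forall>B\<in>ksubsets k.
            \<rho> (real (hamming_dist k A B)) \<le> norm (f k A - f k B) \<and>
            norm (f k A - f k B) \<le> \<omega> (real (hamming_dist k A B))))"

definition weakly_null :: "(nat \<Rightarrow> 'a::real_normed_vector) \<Rightarrow> bool" where
  "weakly_null x \<longleftrightarrow>
     (\<forall>\<phi> :: 'a \<Rightarrow> real. bounded_linear \<phi> \<longrightarrow> (\<lambda>j. \<phi> (x j)) \<longlonglongrightarrow> 0)"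

definition normalized_weakly_null_array :: "nat \<Rightarrow> (nat \<Rightarrow> nat \<Rightarrow> 'a::real_normed_vector) \<Rightarrow> bool" where
  "normalized_weakly_null_array k y \<longleftrightarrow>
     (\<forall>i\<in>{1..k}. (\<forall>j. norm (y i j) = 1) \<and> weakly_null (y i))"

text \<open>Two finite sequences of length n, given through the norms p a = norm of sum a_i x_i
  and q a = norm of sum a_i y_i of their linear combinations with coefficients a,
  are C-equivalent.\<close>
definition C_equiv :: "nat \<Rightarrow> real \<Rightarrow> ((nat \<Rightarrow> real) \<Rightarrow> real) \<Rightarrow> ((nat \<Rightarrow> real) \<Rightarrow> real) \<Rightarrow> bool" where
  "C_equiv n C p q \<longleftrightarrow>
     (\<exists>A B. A > 0 \<and> B > 0 \<and> A * B \<le> C \<and>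
        (\<forall>a::nat \<Rightarrow> real. (1 / A) * p (\<lambda>i. if i < n then a i else 0) \<le> q (\<lambda>i. if i < n then a i else 0) \<and>
                q (\<lambda>i. if i < n then a i else 0) \<le> B * p (\<lambda>i. if i < n then a i else 0)))"

definition vec_norm :: "nat \<Rightarrow> (nat \<Rightarrow> 'a::real_normed_vector) \<Rightarrow> (nat \<Rightarrow> real) \<Rightarrow> real" where
  "vec_norm n x a = norm (\<Sum>i<n. a i *\<^sub>R x i)"

text \<open>R^N is represented by functions nat => real vanishing outside {..<N};
  E is a norm on this space.\<close>
definition supp_in :: "nat \<Rightarrow> (nat \<Rightarrow> real) \<Rightarrow> bool" where
  "supp_in N a \<longleftrightarrow> (\<forall>i\<ge>N. a i = 0)"

definition unit_vec :: "nat \<Rightarrow> nat \<Rightarrow> real" where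
  "unit_vec j = (\<lambda>i. if i = j then 1 else 0)"

definition is_norm_on :: "nat \<Rightarrow> ((nat \<Rightarrow> real) \<Rightarrow> real) \<Rightarrow> bool" where
  "is_norm_on N E \<longleftrightarrow>
     (\<forall>a. supp_in N a \<longrightarrow> E a \<ge> 0 \<and> (E a = 0 \<longleftrightarrow> a = (\<lambda>_. 0))) \<and>
     (\<forall>a c. supp_in N a \<longrightarrow> E (\<lambda>i. c * a i) = \<bar>c\<bar> * E a) \<and>
     (\<forall>a b. supp_in N a \<longrightarrow> supp_in N b \<longrightarrow> E (\<lambda>i. a i + b i) \<le> E a + E b)"

definition normalized_monotone_norm :: "nat \<Rightarrow> ((nat \<Rightarrow> real) \<Rightarrow> real) \<Rightarrow> bool" where
  "normalized_monotone_norm N E \<longleftrightarrow>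
     is_norm_on N E \<and>
     (\<forall>j<N. E (unit_vec j) = 1) \<and>
     (\<forall>a m n. supp_in N a \<longrightarrow> m \<le> n \<longrightarrow> n \<le> N \<longrightarrow>
        E (\<lambda>i. if i < m then a i else 0) \<le> E (\<lambda>i. if i < n then a i else 0))"

definition fin_codim_closed_subspace :: "'a::real_normed_vector set \<Rightarrow> bool" where
  "fin_codim_closed_subspace Z \<longleftrightarrow>
     subspace Z \<and> closed Z \<and> (\<exists>F. finite F \<and> span (Z \<union> F) = UNIV)"

text \<open>The asymptotic game: r further rounds remain, k vectors x 0, ..., x (k-1) are chosen;
  in each round the subspace player picks a closed finite-codimensional subspace, the
  vector player answers by a unit vector in it; finally the predicate P must hold.\<close>
fun asym_game :: "((nat \<Rightarrow> 'a::real_normed_vector) \<Rightarrow> bool) \<Rightarrow> nat \<Rightarrow> nat \<Rightarrow> (nat \<Rightarrow> 'a) \<Rightarrow> bool" where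
  "asym_game P 0 k x = P x"
| "asym_game P (Suc r) k x =
     (\<forall>Z. fin_codim_closed_subspace Z \<longrightarrow>
        (\<exists>v\<in>Z. norm v = 1 \<and> asym_game P r (Suc k) (x(k := v))))"

definition asym_structure :: "'a::real_normed_vector itself \<Rightarrow> nat \<Rightarrow> ((nat \<Rightarrow> real) \<Rightarrow> real) set" where
  "asym_structure TYPE('a) N =
     {E. normalized_monotone_norm N E \<and>
         (\<forall>\<epsilon>>0. asym_game
            (\<lambda>x::nat \<Rightarrow> 'a. C_equiv N (1 + \<epsilon>) (vec_norm N x) (\<lambda>a. E (\<lambda>i. if i < N then a i else 0)))
            N 0 (\<lambda>_. 0))}"

definition sup_norm :: "nat \<Rightarrow> (nat \<Rightarrow> real) \<Rightarrow> real" where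
  "sup_norm n a = (if n = 0 then 0 else Max ((\<lambda>i. \<bar>a i\<bar>) ` {..<n}))"

definition asymptotic_subsequential_c0 :: "'a::real_normed_vector itself \<Rightarrow> bool" where
  "asymptotic_subsequential_c0 TYPE('a) \<longleftrightarrow>
     \<not> (\<exists>F::'a set. finite F \<and> span F = UNIV) \<and>
     (\<exists>C\<ge>1. \<forall>n. \<exists>N. \<forall>E \<in> asym_structure TYPE('a) N.
        \<exists>idx::nat \<Rightarrow> nat. strict_mono_on {..<n} idx \<and> (\<forall>k<n. idx k < N) \<and>
          C_equiv n C
            (\<lambda>a. E (\<lambda>j. \<Sum>k<n. if j = idx k then a k else 0))
            (sup_norm n))"

end

theory Submission
  imports Defs
begin

definition filt_fam :: "nat set set set" where
  "filt_fam = {M. (\<forall>S T. S \<in> M \<longrightarrow> S \<subseteq> T \<longrightarrow> T \<in> M) \<and> (\<forall>S T. S \<in> M \<longrightarrow> T \<in> M \<longrightarrow> S \<inter> T \<in> M)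
      \<and> {} \<notin> M \<and> (\<forall>S. finite (- S) \<longrightarrow> S \<in> M)}"

lemma filt_famD:
  assumes "M \<in> filt_fam"
  shows "S \<in> M \<Longrightarrow> S \<subseteq> T \<Longrightarrow> T \<in> M" "S \<in> M \<Longrightarrow> T \<in> M \<Longrightarrow> S \<inter> T \<in> M"
    "{} \<notin> M" "finite (- S) \<Longrightarrow> S \<in> M"
  using assms unfolding filt_fam_def by blast+

lemma filt_famI:
  assumes "\<And>S T. S \<in> M \<Longrightarrow> S \<subseteq> T \<Longrightarrow> T \<in> M" "\<And>S T. S \<in> M \<Longrightarrow> T \<in> M \<Longrightarrow> S \<inter> T \<in> M"
    "{} \<notin> M" "\<And>S. finite (- S) \<Longrightarrow> S \<in> M"
  shows "M \<in> filt_fam"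
  using assms unfolding filt_fam_def by blast

lemma ultra_fam_exists: "\<exists>M\<in>filt_fam. \<forall>S. S \<in> M \<or> - S \<in> M"
proof -
  have "\<exists>M\<in>filt_fam. \<forall>X\<in>filt_fam. M \<subseteq> X \<longrightarrow> X = M"
  proof (rule Zorn_Lemma2, intro ballI)
    fix C assume C: "C \<in> chains filt_fam"
    show "\<exists>U\<in>filt_fam. \<forall>X\<in>C. X \<subseteq> U"
    proof (cases "C = {}")
      case True
      have "{S. finite (- S)} \<in> filt_fam"
      proof (rule filt_famI)
        fix S T :: "nat set" assume "S \<in> {S. finite (- S)}" "S \<subseteq> T"
        then show "T \<in> {S. finite (- S)}" by (auto intro: finite_subset)
      next
        fix S T :: "nat set" assume "S \<in> {S. finite (- S)}" "T \<in> {S. finite (- S)}"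
        then show "S \<inter> T \<in> {S. finite (- S)}" by (auto simp: Compl_Int)
      qed auto
      then show ?thesis using True by blast
    next
      case False
      have sub: "\<And>X. X \<in> C \<Longrightarrow> X \<in> filt_fam" and ch: "\<And>X Y. X \<in> C \<Longrightarrow> Y \<in> C \<Longrightarrow> X \<subseteq> Y \<or> Y \<subseteq> X"
        using C unfolding chains_def chain_subset_def by auto
      obtain X0 where X0: "X0 \<in> C" using False by blast
      have "\<Union>C \<in> filt_fam"
      proof (rule filt_famI)
        fix S T assume "S \<in> \<Union>C" "S \<subseteq> T"
        then obtain X where "X \<in> C" "S \<in> X" by blast
        then have "T \<in> X" using filt_famD(1)[OF sub] \<open>S \<subseteq> T\<close> by blast
        then show "T \<in> \<Union>C" using \<open>X \<in> C\<close> by blast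
      next
        fix S T assume "S \<in> \<Union>C" "T \<in> \<Union>C"
        then obtain X Y where XY: "X \<in> C" "Y \<in> C" "S \<in> X" "T \<in> Y" by blast
        show "S \<inter> T \<in> \<Union>C"
        proof (cases "X \<subseteq> Y")
          case True
          then have "S \<inter> T \<in> Y" using XY filt_famD(2)[OF sub[OF XY(2)]] by blast
          then show ?thesis using XY by blast
        next
          case False then have "Y \<subseteq> X" using ch XY by blast
          then have "S \<inter> T \<in> X" using XY filt_famD(2)[OF sub[OF XY(1)]] by blast
          then show ?thesis using XY by blast
        qed
      next
        show "{} \<notin> \<Union>C" using filt_famD(3)[OF sub] by blast
      next
        fix S :: "nat set" assume "finite (- S)"
        then have "S \<in> X0" using filt_famD(4)[OF sub[OF X0]] by blast
        then show "S \<in> \<Union>C" using X0 by blast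
      qed
      then show ?thesis by blast
    qed
  qed
  then obtain M where M: "M \<in> filt_fam" and max: "\<And>X. X \<in> filt_fam \<Longrightarrow> M \<subseteq> X \<Longrightarrow> X = M" by blast
  have UM: "UNIV \<in> M" using filt_famD(4)[OF M] by simp
  have "S \<in> M \<or> - S \<in> M" for S
  proof (rule ccontr)
    assume nS: "\<not> (S \<in> M \<or> - S \<in> M)"
    define M' where "M' = {T. \<exists>X\<in>M. X \<inter> S \<subseteq> T}"
    have ne: "X \<inter> S \<noteq> {}" if "X \<in> M" for X
    proof
      assume "X \<inter> S = {}" then have "X \<subseteq> - S" by blast
      then have "- S \<in> M" using filt_famD(1)[OF M that] by blast
      then show False using nS by blast
    qed
    have "M' \<in> filt_fam"
    proof (rule filt_famI)
      fix A B assume "A \<in> M'" "A \<subseteq> B"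
      then show "B \<in> M'" unfolding M'_def by blast
    next
      fix A B assume "A \<in> M'" "B \<in> M'"
      then obtain X Y where "X \<in> M" "Y \<in> M" "X \<inter> S \<subseteq> A" "Y \<inter> S \<subseteq> B" unfolding M'_def by blast
      moreover have "X \<inter> Y \<in> M" using filt_famD(2)[OF M \<open>X \<in> M\<close> \<open>Y \<in> M\<close>] .
      ultimately show "A \<inter> B \<in> M'" unfolding M'_def by blast
    next
      show "{} \<notin> M'" using ne unfolding M'_def by blast
    next
      fix A :: "nat set" assume "finite (- A)"
      then have "A \<in> M" using filt_famD(4)[OF M] by blast
      then show "A \<in> M'" unfolding M'_def by blast
    qed
    moreover have "M \<subseteq> M'" unfolding M'_def by blast
    ultimately have "M' = M" using max by blast
    moreover have "S \<in> M'" unfolding M'_def using UM by blast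
    ultimately show False using nS by blast
  qed
  then show ?thesis using M by blast
qed

lemma ultrafilter_exists:
  "\<exists>F::nat filter. F \<noteq> bot \<and> F \<le> sequentially \<and> (\<forall>P. eventually P F \<or> eventually (\<lambda>x. \<not> P x) F)"
proof -
  obtain M where M: "M \<in> filt_fam" and U: "\<forall>S. S \<in> M \<or> - S \<in> M" using ultra_fam_exists by blast
  have isf: "is_filter (\<lambda>P. Collect P \<in> M)"
  proof
    show "Collect (\<lambda>x. True) \<in> M" using filt_famD(4)[OF M] by simp
  next
    fix P Q assume "Collect P \<in> M" "Collect Q \<in> M"
    then have "Collect P \<inter> Collect Q \<in> M" using filt_famD(2)[OF M] by blast
    then show "Collect (\<lambda>x. P x \<and> Q x) \<in> M" by (simp add: Collect_conj_eq)
  next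
    fix P Q assume "\<forall>x. P x \<longrightarrow> Q x" "Collect P \<in> M"
    then show "Collect Q \<in> M" using filt_famD(1)[OF M] by blast
  qed
  define F where "F = Abs_filter (\<lambda>P. Collect P \<in> M)"
  have ev: "eventually P F \<longleftrightarrow> Collect P \<in> M" for P
    unfolding F_def using eventually_Abs_filter[OF isf] by simp
  have "F \<noteq> bot"
  proof
    assume "F = bot" then have "eventually (\<lambda>x. False) F" by simp
    then show False using ev filt_famD(3)[OF M] by simp
  qed
  moreover have "F \<le> sequentially"
    unfolding le_filter_def
  proof (intro allI impI)
    fix P assume "eventually P sequentially"
    then obtain N where "\<forall>n\<ge>N. P n" by (auto simp: eventually_sequentially)
    then have "- Collect P \<subseteq> {..<N}" by (auto simp: not_less[symmetric])
    then have "finite (- Collect P)" using finite_subset by blast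
    then show "eventually P F" using ev filt_famD(4)[OF M] by blast
  qed
  moreover have "eventually P F \<or> eventually (\<lambda>x. \<not> P x) F" for P
    using U[rule_format, of "Collect P"] ev by (simp add: Compl_eq)
  ultimately show ?thesis by blast
qed

locale ufilt =
  fixes F :: "nat filter"
  assumes Fnb: "F \<noteq> bot" and Fseq: "F \<le> sequentially"
    and Fultra: "\<And>P. eventually P F \<or> eventually (\<lambda>x. \<not> P x) F"
begin

definition bnd :: "(nat \<Rightarrow> real) \<Rightarrow> bool" where
  "bnd h \<longleftrightarrow> (\<exists>M. \<forall>m. \<bar>h m\<bar> \<le> M)"

lemma ulim_ex:
  assumes "bnd h"
  shows "\<exists>l. (h \<longlongrightarrow> l) F"
proof -
  obtain M where M: "\<And>m. \<bar>h m\<bar> \<le> M" using assms unfolding bnd_def by blast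
  define T where "T = {t. eventually (\<lambda>m. h m \<ge> t) F}"
  have "\<forall>m. - M \<le> h m" using M by (metis abs_le_iff minus_le_iff)
  then have "- M \<in> T" unfolding T_def by (simp add: always_eventually)
  have Tb: "t \<le> M" if "t \<in> T" for t
  proof (rule ccontr)
    assume "\<not> t \<le> M"
    have "eventually (\<lambda>m. h m \<ge> t) F" using that unfolding T_def by blast
    then have "eventually (\<lambda>m. False) F"
    proof (rule eventually_mono)
      fix m assume "t \<le> h m" then show False using M[of m] \<open>\<not> t \<le> M\<close> by (simp add: abs_le_iff)
    qed
    then show False using Fnb by simp
  qed
  have bdd: "bdd_above T" using Tb by (auto simp: bdd_above_def)
  have ne: "T \<noteq> {}" using \<open>- M \<in> T\<close> by blast
  define l where "l = Sup T"
  have "(h \<longlongrightarrow> l) F"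
  proof (rule order_tendstoI)
    fix a assume "a < l"
    then obtain t where "t \<in> T" "a < t" using less_cSup_iff[OF ne bdd] unfolding l_def by blast
    then show "eventually (\<lambda>m. a < h m) F"
      unfolding T_def by (auto elim: eventually_mono)
  next
    fix a assume "l < a"
    show "eventually (\<lambda>m. h m < a) F"
    proof (rule ccontr)
      assume "\<not> eventually (\<lambda>m. h m < a) F"
      then have "eventually (\<lambda>m. \<not> h m < a) F" using Fultra by blast
      then have "a \<in> T" unfolding T_def by (auto elim: eventually_mono)
      then have "a \<le> l" unfolding l_def using cSup_upper[OF _ bdd] by blast
      then show False using \<open>l < a\<close> by simp
    qed
  qed
  then show ?thesis by blast
qed

lemma ulim_tendsto: "bnd h \<Longrightarrow> (h \<longlongrightarrow> Lim F h) F"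
  using ulim_ex tendsto_Lim Fnb by blast

lemma ulim_unique: "(h \<longlongrightarrow> l) F \<Longrightarrow> Lim F h = l"
  using tendsto_Lim Fnb by blast

lemma ulim_const[simp]: "Lim F (\<lambda>m. c) = c"
  using ulim_unique[OF tendsto_const] .

lemma bnd_const[simp]: "bnd (\<lambda>m. c)"
  unfolding bnd_def by blast

lemma ulim_le:
  assumes "bnd h1" "bnd h2" "\<And>m. h1 m \<le> h2 m"
  shows "Lim F h1 \<le> Lim F h2"
  using tendsto_le[OF Fnb ulim_tendsto[OF assms(2)] ulim_tendsto[OF assms(1)]] assms(3) by simp

lemma ulim_le_ev:
  assumes "bnd h1" "bnd h2" "eventually (\<lambda>m. h1 m \<le> h2 m) F"
  shows "Lim F h1 \<le> Lim F h2"
  using tendsto_le[OF Fnb ulim_tendsto[OF assms(2)] ulim_tendsto[OF assms(1)]] assms(3) by simp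

lemma bnd_add: "bnd h1 \<Longrightarrow> bnd h2 \<Longrightarrow> bnd (\<lambda>m. h1 m + h2 m)"
  unfolding bnd_def by (metis abs_triangle_ineq add_mono order_trans)

lemma bnd_cmult: "bnd h \<Longrightarrow> bnd (\<lambda>m. c * h m)"
  unfolding bnd_def by (metis abs_ge_zero abs_mult mult_left_mono)

lemma ulim_add:
  assumes "bnd h1" "bnd h2"
  shows "Lim F (\<lambda>m. h1 m + h2 m) = Lim F h1 + Lim F h2"
  by (rule ulim_unique, rule tendsto_add; rule ulim_tendsto; fact)

lemma ulim_cmult:
  assumes "bnd h"
  shows "Lim F (\<lambda>m. c * h m) = c * Lim F h"
  by (rule ulim_unique, rule tendsto_mult_left, rule ulim_tendsto; fact)

lemma ulim_dist:
  assumes "bnd h1" "bnd h2" "\<And>m. \<bar>h1 m - h2 m\<bar> \<le> c"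
  shows "\<bar>Lim F h1 - Lim F h2\<bar> \<le> c"
proof -
  have a: "h1 m \<le> h2 m + c" "h2 m \<le> h1 m + c" for m using assms(3)[of m] by (simp_all add: abs_le_iff)
  have "Lim F h1 \<le> Lim F (\<lambda>m. h2 m + c)"
    using assms a by (intro ulim_le bnd_add) auto
  moreover have "Lim F (\<lambda>m. h2 m + c) = Lim F h2 + c" using ulim_add[OF assms(2) bnd_const] by simp
  moreover have "Lim F h2 \<le> Lim F (\<lambda>m. h1 m + c)"
    using assms a by (intro ulim_le bnd_add) auto
  moreover have "Lim F (\<lambda>m. h1 m + c) = Lim F h1 + c" using ulim_add[OF assms(1) bnd_const] by simp
  ultimately show ?thesis by linarith
qed

lemma ev_seq: "eventually P sequentially \<Longrightarrow> eventually P F"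
  using Fseq by (simp add: le_filter_def)

lemma ev_large: "eventually (\<lambda>m. m > K) F"
  by (rule ev_seq) (simp add: eventually_gt_at_top)

lemma ev_ex: "eventually P F \<Longrightarrow> \<exists>m>K. P m"
proof -
  assume "eventually P F"
  then have "eventually (\<lambda>m. m > K \<and> P m) F" using ev_large eventually_conj by blast
  then show ?thesis using eventually_happens' Fnb by blast
qed

end

definition hb_fam :: "'a::real_normed_vector \<Rightarrow> ('a \<times> real) set set" where
  "hb_fam u = {G. (\<forall>x a b. (x,a) \<in> G \<longrightarrow> (x,b) \<in> G \<longrightarrow> a = b)
     \<and> (\<forall>x y a b. (x,a) \<in> G \<longrightarrow> (y,b) \<in> G \<longrightarrow> (x+y, a+b) \<in> G)
     \<and> (\<forall>x a c. (x,a) \<in> G \<longrightarrow> (c *\<^sub>R x, c*a) \<in> G)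
     \<and> (\<forall>x a. (x,a) \<in> G \<longrightarrow> a \<le> norm x)
     \<and> (u, norm u) \<in> G}"

lemma hb_famD:
  assumes "G \<in> hb_fam u"
  shows "(x,a) \<in> G \<Longrightarrow> (x,b) \<in> G \<Longrightarrow> a = b"
    "(x,a) \<in> G \<Longrightarrow> (y,b) \<in> G \<Longrightarrow> (x+y, a+b) \<in> G"
    "(x,a) \<in> G \<Longrightarrow> (c *\<^sub>R x, c*a) \<in> G"
    "(x,a) \<in> G \<Longrightarrow> a \<le> norm x"
    "(u, norm u) \<in> G"
  using assms unfolding hb_fam_def by blast+

lemma hb_famI:
  assumes "\<And>x a b. (x,a) \<in> G \<Longrightarrow> (x,b) \<in> G \<Longrightarrow> a = b"
    "\<And>x y a b. (x,a) \<in> G \<Longrightarrow> (y,b) \<in> G \<Longrightarrow> (x+y, a+b) \<in> G"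
    "\<And>x a c. (x,a) \<in> G \<Longrightarrow> (c *\<^sub>R x, c*a) \<in> G"
    "\<And>x a. (x,a) \<in> G \<Longrightarrow> a \<le> norm x"
    "(u, norm u) \<in> G"
  shows "G \<in> hb_fam u"
  using assms unfolding hb_fam_def by blast

lemma hb_max_exists: "\<exists>M\<in>hb_fam u. \<forall>X\<in>hb_fam u. M \<subseteq> X \<longrightarrow> X = M"
proof (rule Zorn_Lemma2, intro ballI)
  fix C assume C: "C \<in> chains (hb_fam u)"
  show "\<exists>U\<in>hb_fam u. \<forall>X\<in>C. X \<subseteq> U"
  proof (cases "C = {}")
    case True
    define G0 where "G0 = {(c *\<^sub>R u, c * norm u) | c. True}"
    have "G0 \<in> hb_fam u"
    proof (rule hb_famI)
      fix x a b assume "(x,a) \<in> G0" "(x,b) \<in> G0"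
      then obtain c d where cd: "x = c *\<^sub>R u" "a = c * norm u" "x = d *\<^sub>R u" "b = d * norm u"
        unfolding G0_def by blast
      show "a = b"
      proof (cases "u = 0")
        case True then show ?thesis using cd by simp
      next
        case False
        then have "c = d" using cd by (metis scaleR_cancel_right)
        then show ?thesis using cd by simp
      qed
    next
      fix x y a b assume "(x,a) \<in> G0" "(y,b) \<in> G0"
      then obtain c d where cd: "x = c *\<^sub>R u" "a = c * norm u" "y = d *\<^sub>R u" "b = d * norm u"
        unfolding G0_def by blast
      then have "x + y = (c+d) *\<^sub>R u" "a + b = (c+d) * norm u" by (simp_all add: algebra_simps)
      then show "(x+y, a+b) \<in> G0" unfolding G0_def by blast
    next
      fix x a e assume "(x,a) \<in> G0"
      then obtain c where cd: "x = c *\<^sub>R u" "a = c * norm u" unfolding G0_def by blast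
      then have "e *\<^sub>R x = (e*c) *\<^sub>R u" "e * a = (e*c) * norm u" by simp_all
      then show "(e *\<^sub>R x, e*a) \<in> G0" unfolding G0_def by blast
    next
      fix x a assume "(x,a) \<in> G0"
      then obtain c where cd: "x = c *\<^sub>R u" "a = c * norm u" unfolding G0_def by blast
      then show "a \<le> norm x" by (simp add: mult_right_mono)
    next
      have "u = 1 *\<^sub>R u" "norm u = 1 * norm u" by simp_all
      then show "(u, norm u) \<in> G0" unfolding G0_def by blast
    qed
    then show ?thesis using True by blast
  next
    case False
    have sub: "\<And>X. X \<in> C \<Longrightarrow> X \<in> hb_fam u" and ch: "\<And>X Y. X \<in> C \<Longrightarrow> Y \<in> C \<Longrightarrow> X \<subseteq> Y \<or> Y \<subseteq> X"
      using C unfolding chains_def chain_subset_def by auto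
    obtain X0 where X0: "X0 \<in> C" using False by blast
    have two: "\<exists>Z\<in>C. p \<in> Z \<and> q \<in> Z" if pq: "p \<in> \<Union>C" "q \<in> \<Union>C" for p q
    proof -
      obtain X Y where XY: "X \<in> C" "Y \<in> C" "p \<in> X" "q \<in> Y" using pq by blast
      show ?thesis
      proof (cases "X \<subseteq> Y")
        case True then show ?thesis using XY by blast
      next
        case False then have "Y \<subseteq> X" using ch XY by blast
        then show ?thesis using XY by blast
      qed
    qed
    have "\<Union>C \<in> hb_fam u"
    proof (rule hb_famI)
      fix x a b assume "(x,a) \<in> \<Union>C" "(x,b) \<in> \<Union>C"
      then obtain Z where "Z \<in> C" "(x,a) \<in> Z" "(x,b) \<in> Z" using two by blast
      then show "a = b" using hb_famD(1)[OF sub] by blast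
    next
      fix x y a b assume "(x,a) \<in> \<Union>C" "(y,b) \<in> \<Union>C"
      then obtain Z where "Z \<in> C" "(x,a) \<in> Z" "(y,b) \<in> Z" using two by blast
      then show "(x+y, a+b) \<in> \<Union>C" using hb_famD(2)[OF sub] by blast
    next
      fix x a c assume "(x,a) \<in> \<Union>C"
      then obtain Z where "Z \<in> C" "(x,a) \<in> Z" by blast
      then show "(c *\<^sub>R x, c*a) \<in> \<Union>C" using hb_famD(3)[OF sub] by blast
    next
      fix x a assume "(x,a) \<in> \<Union>C"
      then obtain Z where "Z \<in> C" "(x,a) \<in> Z" by blast
      then show "a \<le> norm x" using hb_famD(4)[OF sub] by blast
    next
      show "(u, norm u) \<in> \<Union>C" using hb_famD(5)[OF sub[OF X0]] X0 by blast
    qed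
    then show ?thesis by blast
  qed
qed

lemma norming_functional:
  fixes u :: "'a::real_normed_vector"
  shows "\<exists>\<phi>. bounded_linear \<phi> \<and> \<phi> u = norm u \<and> (\<forall>x. \<bar>\<phi> x\<bar> \<le> norm x)"
proof -
  obtain M where M: "M \<in> hb_fam u" and max: "\<And>X. X \<in> hb_fam u \<Longrightarrow> M \<subseteq> X \<Longrightarrow> X = M"
    using hb_max_exists[of u] by blast
  note fn = hb_famD(1)[OF M] and ad = hb_famD(2)[OF M] and sc = hb_famD(3)[OF M]
    and dm = hb_famD(4)[OF M] and uu = hb_famD(5)[OF M]
  have zero: "(0, 0) \<in> M" using sc[OF uu, of 0] by simp
  have dom: "\<exists>a. (x0, a) \<in> M" for x0
  proof (rule ccontr)
    assume nx: "\<nexists>a. (x0, a) \<in> M"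
    define S where "S = {a - norm (s - x0) | s a. (s,a) \<in> M}"
    have key: "a - norm (s - x0) \<le> norm (s' + x0) - b" if "(s,a) \<in> M" "(s',b) \<in> M" for s a s' b
    proof -
      have "a + b \<le> norm (s + s')" using dm[OF ad[OF that]] .
      also have "s + s' = (s - x0) + (s' + x0)" by simp
      also have "norm \<dots> \<le> norm (s - x0) + norm (s' + x0)" by (rule norm_triangle_ineq)
      finally show ?thesis by simp
    qed
    have Sne: "S \<noteq> {}" unfolding S_def using zero by blast
    have Sbdd: "bdd_above S" unfolding S_def bdd_above_def using key[OF _ zero] by blast
    define \<xi> where "\<xi> = Sup S"
    have xi_ge: "a - norm (s - x0) \<le> \<xi>" if "(s,a) \<in> M" for s a
      unfolding \<xi>_def using that by (intro cSup_upper[OF _ Sbdd]) (auto simp: S_def)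
    have xi_le: "\<xi> \<le> norm (s' + x0) - b" if "(s',b) \<in> M" for s' b
      unfolding \<xi>_def using Sne key[OF _ that] by (intro cSup_least) (auto simp: S_def)
    define M' where "M' = {(s + t *\<^sub>R x0, a + t * \<xi>) | s a t. (s,a) \<in> M}"
    have M'I: "(s + t *\<^sub>R x0, a + t * \<xi>) \<in> M'" if "(s,a) \<in> M" for s a t
      unfolding M'_def using that by blast
    have "M' \<in> hb_fam u"
    proof (rule hb_famI)
      fix x a b assume "(x,a) \<in> M'" "(x,b) \<in> M'"
      then obtain s a0 t s' b0 t' where st: "(s,a0) \<in> M" "(s',b0) \<in> M" "x = s + t *\<^sub>R x0" "a = a0 + t * \<xi>"
        "x = s' + t' *\<^sub>R x0" "b = b0 + t' * \<xi>" unfolding M'_def by blast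
      have "t = t'"
      proof (rule ccontr)
        assume "t \<noteq> t'"
        have "(s + (-1) *\<^sub>R s', a0 + (-1) * b0) \<in> M" using ad[OF st(1) sc[OF st(2)]] .
        then have "((1 / (t' - t)) *\<^sub>R (s + (-1) *\<^sub>R s'), (1 / (t' - t)) * (a0 + (-1) * b0)) \<in> M" using sc by blast
        moreover have "(1 / (t' - t)) *\<^sub>R (s + (-1) *\<^sub>R s') = x0"
        proof -
          have "s - s' = (t' - t) *\<^sub>R x0" using st(3,5) by (simp add: algebra_simps)
          then show ?thesis using \<open>t \<noteq> t'\<close> by simp
        qed
        ultimately show False using nx by auto
      qed
      then have "s = s'" using st by simp
      then have "a0 = b0" using fn st by blast
      then show "a = b" using st \<open>t = t'\<close> by simp
    next
      fix x y a b assume "(x,a) \<in> M'" "(y,b) \<in> M'"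
      then obtain s a0 t s' b0 t' where st: "(s,a0) \<in> M" "(s',b0) \<in> M" "x = s + t *\<^sub>R x0" "a = a0 + t * \<xi>"
        "y = s' + t' *\<^sub>R x0" "b = b0 + t' * \<xi>" unfolding M'_def by blast
      have "(s + s' + (t + t') *\<^sub>R x0, a0 + b0 + (t + t') * \<xi>) \<in> M'" using M'I[OF ad[OF st(1,2)]] .
      moreover have "s + s' + (t + t') *\<^sub>R x0 = x + y" "a0 + b0 + (t + t') * \<xi> = a + b"
        using st by (simp_all add: algebra_simps)
      ultimately show "(x+y, a+b) \<in> M'" by simp
    next
      fix x a c assume "(x,a) \<in> M'"
      then obtain s a0 t where st: "(s,a0) \<in> M" "x = s + t *\<^sub>R x0" "a = a0 + t * \<xi>"
        unfolding M'_def by blast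
      have "(c *\<^sub>R s + (c * t) *\<^sub>R x0, c * a0 + (c * t) * \<xi>) \<in> M'" using M'I[OF sc[OF st(1)]] .
      moreover have "c *\<^sub>R s + (c * t) *\<^sub>R x0 = c *\<^sub>R x" "c * a0 + (c * t) * \<xi> = c * a"
        using st by (simp_all add: algebra_simps)
      ultimately show "(c *\<^sub>R x, c*a) \<in> M'" by simp
    next
      fix x a assume "(x,a) \<in> M'"
      then obtain s a0 t where st: "(s,a0) \<in> M" "x = s + t *\<^sub>R x0" "a = a0 + t * \<xi>"
        unfolding M'_def by blast
      show "a \<le> norm x"
      proof (cases t "0::real" rule: linorder_cases)
        case less
        define r where "r = - t"
        have r: "r > 0" using less r_def by simp
        have "(1/r) * a0 - norm ((1/r) *\<^sub>R s - x0) \<le> \<xi>" using xi_ge[OF sc[OF st(1)]] .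
        then have "r * ((1/r) * a0 - norm ((1/r) *\<^sub>R s - x0)) \<le> r * \<xi>" using r by (simp add: mult_left_mono)
        moreover have "r * norm ((1/r) *\<^sub>R s - x0) = norm (s - r *\<^sub>R x0)"
        proof -
          have "r * norm ((1/r) *\<^sub>R s - x0) = norm (r *\<^sub>R ((1/r) *\<^sub>R s - x0))" using r by simp
          also have "r *\<^sub>R ((1/r) *\<^sub>R s - x0) = s - r *\<^sub>R x0" using r by (simp add: algebra_simps)
          finally show ?thesis .
        qed
        ultimately have "a0 - norm (s - r *\<^sub>R x0) \<le> r * \<xi>" using r by (simp add: algebra_simps)
        then show ?thesis using st r_def by (simp add: algebra_simps)
      next
        case equal then show ?thesis using st dm by simp
      next
        case greater
        have "\<xi> \<le> norm ((1/t) *\<^sub>R s + x0) - (1/t) * a0" using xi_le[OF sc[OF st(1)]] .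
        then have "t * \<xi> \<le> t * (norm ((1/t) *\<^sub>R s + x0) - (1/t) * a0)" using greater by (simp add: mult_left_mono)
        moreover have "t * norm ((1/t) *\<^sub>R s + x0) = norm (s + t *\<^sub>R x0)"
        proof -
          have "t * norm ((1/t) *\<^sub>R s + x0) = norm (t *\<^sub>R ((1/t) *\<^sub>R s + x0))" using greater by simp
          also have "t *\<^sub>R ((1/t) *\<^sub>R s + x0) = s + t *\<^sub>R x0" using greater by (simp add: algebra_simps)
          finally show ?thesis .
        qed
        ultimately have "t * \<xi> \<le> norm (s + t *\<^sub>R x0) - a0" using greater by (simp add: algebra_simps)
        then show ?thesis using st by (simp add: algebra_simps)
      qed
    next
      show "(u, norm u) \<in> M'" using M'I[OF uu, of 0] by simp
    qed
    moreover have "M \<subseteq> M'" using M'I[of _ _ 0] by auto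
    ultimately have "M' = M" using max by blast
    moreover have "(x0, \<xi>) \<in> M'" using M'I[OF zero, of 1] by simp
    ultimately show False using nx by blast
  qed
  define \<phi> where "\<phi> x = (THE a. (x,a) \<in> M)" for x
  have phi: "(x, \<phi> x) \<in> M" for x
  proof -
    obtain a where "(x,a) \<in> M" using dom by blast
    then show ?thesis unfolding \<phi>_def using fn by (metis theI)
  qed
  have add: "\<phi> (x + y) = \<phi> x + \<phi> y" for x y using fn[OF phi ad[OF phi phi]] .
  have scl: "\<phi> (c *\<^sub>R x) = c * \<phi> x" for c x using fn[OF phi sc[OF phi]] .
  have bnd: "\<bar>\<phi> x\<bar> \<le> norm x" for x
  proof -
    have "\<phi> x \<le> norm x" using dm[OF phi] .
    moreover have "\<phi> ((-1) *\<^sub>R x) \<le> norm ((-1) *\<^sub>R x)" using dm[OF phi] .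
    then have "- \<phi> x \<le> norm x" using scl[of "-1" x] by simp
    ultimately show ?thesis by simp
  qed
  have "bounded_linear \<phi>"
    by (rule bounded_linear_intro[where K=1]) (use add scl bnd in auto)
  moreover have "\<phi> u = norm u" using fn[OF phi uu] .
  ultimately show ?thesis using bnd by blast
qed

lemma norm_lower_infdist:
  fixes Z :: "'a::real_normed_vector set"
  assumes "subspace Z" "z \<in> Z"
  shows "\<bar>c\<bar> * infdist g Z \<le> norm (z + c *\<^sub>R g)"
proof (cases "c = 0")
  case True then show ?thesis by simp
next
  case False
  have "(- (1/c)) *\<^sub>R z \<in> Z" by (rule subspace_scale[OF assms])
  then have "infdist g Z \<le> dist g ((- (1/c)) *\<^sub>R z)" by (rule infdist_le)
  also have "dist g ((- (1/c)) *\<^sub>R z) = norm ((1/c) *\<^sub>R (z + c *\<^sub>R g))"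
    using False by (simp add: dist_norm algebra_simps)
  also have "\<dots> = norm (z + c *\<^sub>R g) / \<bar>c\<bar>" by simp
  finally show ?thesis using False by (simp add: field_simps)
qed

lemma closed_span_insert:
  fixes Z :: "'a::banach set"
  assumes cl: "closed Z" and sub: "subspace Z"
  shows "closed (span (insert g Z))"
proof (cases "g \<in> Z")
  case True
  then have "span (insert g Z) = span Z" by (simp add: insert_absorb)
  moreover have "span Z = Z" using sub span_eq_iff by blast
  ultimately show ?thesis using cl by metis
next
  case False
  have Zne: "Z \<noteq> {}" using sub subspace_0 by blast
  define d where "d = infdist g Z"
  have d: "d > 0" unfolding d_def using infdist_pos_not_in_closed[OF cl Zne False] .
  have sp: "span (insert g Z) = {x. \<exists>k. x - k *\<^sub>R g \<in> Z}"
  proof -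
    have spZ: "span Z = Z" using sub span_eq_iff by blast
    show ?thesis using span_insert[of g Z] unfolding spZ .
  qed
  show ?thesis
    unfolding closed_sequential_limits
  proof (intro allI impI, elim conjE)
    fix x l assume xin: "\<forall>n. x n \<in> span (insert g Z)" and lim: "x \<longlonglongrightarrow> l"
    have "\<forall>n. \<exists>k. x n - k *\<^sub>R g \<in> Z" using xin sp by blast
    then have "\<exists>c. \<forall>n. x n - c n *\<^sub>R g \<in> Z" by (rule choice)
    then obtain c where c: "\<And>n. x n - c n *\<^sub>R g \<in> Z" by blast
    have cdiff: "\<bar>c n - c m\<bar> * d \<le> norm (x n - x m)" for n m
    proof -
      have "(x m - c m *\<^sub>R g) - (x n - c n *\<^sub>R g) \<in> Z" using c sub by (simp add: subspace_diff)
      from norm_lower_infdist[OF sub this, of "c m - c n" g]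
      have "\<bar>c m - c n\<bar> * d \<le> norm ((x m - c m *\<^sub>R g) - (x n - c n *\<^sub>R g) + (c m - c n) *\<^sub>R g)"
        unfolding d_def .
      also have "(x m - c m *\<^sub>R g) - (x n - c n *\<^sub>R g) + (c m - c n) *\<^sub>R g = x m - x n"
        by (simp add: algebra_simps)
      finally show ?thesis by (metis norm_minus_commute abs_minus_commute)
    qed
    have "Cauchy x" using lim by (rule LIMSEQ_imp_Cauchy)
    have "Cauchy c"
    proof (rule CauchyI)
      fix e :: real assume "e > 0"
      then obtain M where M: "\<forall>m\<ge>M. \<forall>n\<ge>M. norm (x m - x n) < e * d"
        using CauchyD[OF \<open>Cauchy x\<close>, of "e * d"] d by auto
      have "\<forall>m\<ge>M. \<forall>n\<ge>M. norm (c m - c n) < e"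
      proof (intro allI impI)
        fix m n assume "m \<ge> M" "n \<ge> M"
        then have "norm (x m - x n) < e * d" using M by blast
        then have "\<bar>c m - c n\<bar> * d < e * d" using cdiff[of m n] by linarith
        then show "norm (c m - c n) < e" using d by simp
      qed
      then show "\<exists>M. \<forall>m\<ge>M. \<forall>n\<ge>M. norm (c m - c n) < e" by blast
    qed
    then obtain c0 where c0: "c \<longlonglongrightarrow> c0" using Cauchy_convergent_iff convergent_def by blast
    have "(\<lambda>n. x n - c n *\<^sub>R g) \<longlonglongrightarrow> l - c0 *\<^sub>R g"
      by (intro tendsto_intros lim c0)
    from closed_sequentially[OF cl c \<open>(\<lambda>n. x n - c n *\<^sub>R g) \<longlonglongrightarrow> l - c0 *\<^sub>R g\<close>]
    have "l - c0 *\<^sub>R g \<in> Z" .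
    then show "l \<in> span (insert g Z)" unfolding sp by blast
  qed
qed

lemma span_insert_span: "span (insert g (span S)) = span (insert g S)"
proof
  show "span (insert g (span S)) \<subseteq> span (insert g S)"
  proof (rule span_minimal)
    show "insert g (span S) \<subseteq> span (insert g S)"
    proof -
      have "span S \<subseteq> span (insert g S)" by (rule span_mono) blast
      moreover have "g \<in> span (insert g S)" by (rule span_base) simp
      ultimately show ?thesis using span_superset[of S] by blast
    qed
  qed (rule subspace_span)
  show "span (insert g S) \<subseteq> span (insert g (span S))"
  proof (rule span_mono)
    show "insert g S \<subseteq> insert g (span S)" using span_superset[of S] by blast
  qed
qed

lemma closed_span_Un_finite:
  fixes Z :: "'a::banach set"
  assumes cl: "closed Z" and sub: "subspace Z" and fin: "finite G"
  shows "closed (span (Z \<union> G))"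
  using fin
proof (induction G rule: finite_induct)
  case empty
  have "span Z = Z" using sub span_eq_iff by blast
  then show ?case using cl by (metis Un_empty_right)
next
  case (insert g G)
  have "span (Z \<union> insert g G) = span (insert g (span (Z \<union> G)))"
    using span_insert_span[of g "Z \<union> G"] by simp
  then show ?case using closed_span_insert[OF insert.IH subspace_span] by simp
qed

lemma closed_kernel_bounded:
  fixes \<psi> :: "'a::real_normed_vector \<Rightarrow> real"
  assumes add: "\<And>x y. \<psi> (x + y) = \<psi> x + \<psi> y" and scl: "\<And>c x. \<psi> (c *\<^sub>R x) = c * \<psi> x"
    and cl: "closed {x. \<psi> x = 0}"
  shows "bounded_linear \<psi>"
proof (cases "\<forall>x. \<psi> x = 0")
  case True
  then show ?thesis by (intro bounded_linear_intro[where K=0]) (auto)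
next
  case False
  then obtain w where w: "\<psi> w \<noteq> 0" by blast
  define u where "u = (1 / \<psi> w) *\<^sub>R w"
  have u: "\<psi> u = 1" unfolding u_def using w scl by simp
  define K where "K = {x. \<psi> x = 0}"
  have "0 \<in> K" unfolding K_def using scl[of 0 u] by simp
  have "u \<notin> K" unfolding K_def using u by simp
  define r where "r = infdist u K"
  have r: "r > 0" unfolding r_def using infdist_pos_not_in_closed[of K u] cl \<open>0 \<in> K\<close> \<open>u \<notin> K\<close> K_def by blast
  have b: "\<bar>\<psi> y\<bar> \<le> norm y * (1 / r)" for y
  proof (cases "\<psi> y = 0")
    case True then show ?thesis using r by simp
  next
    case False
    have "\<psi> (u - (1 / \<psi> y) *\<^sub>R y) = 0"
      using add[of u "(-1) *\<^sub>R ((1 / \<psi> y) *\<^sub>R y)"] scl[of "-1"] scl[of "1 / \<psi> y" y] u False by simp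
    then have "u - (1 / \<psi> y) *\<^sub>R y \<in> K" unfolding K_def by simp
    then have "r \<le> dist u (u - (1 / \<psi> y) *\<^sub>R y)" unfolding r_def by (rule infdist_le)
    also have "\<dots> = norm y / \<bar>\<psi> y\<bar>" by (simp add: dist_norm)
    finally have "r * \<bar>\<psi> y\<bar> \<le> norm y" using False by (simp add: field_simps)
    then show ?thesis using r by (simp add: field_simps mult.commute)
  qed
  show ?thesis by (rule bounded_linear_intro[where K="1/r"]) (use add scl b in auto)
qed

lemma weakly_null_near:
  fixes y :: "nat \<Rightarrow> 'a::banach"
  assumes Zf: "fin_codim_closed_subspace Z" and wn: "weakly_null y" and dpos: "\<delta> > 0"
  shows "eventually (\<lambda>m. \<exists>z\<in>Z. norm (y m - z) < \<delta>) sequentially"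
proof -
  have sub: "subspace Z" and cl: "closed Z" and "\<exists>F. finite F \<and> span (Z \<union> F) = UNIV"
    using Zf unfolding fin_codim_closed_subspace_def by auto
  then obtain F where F: "finite F" "span (Z \<union> F) = UNIV" by blast
  have spZ: "span Z = Z" using sub span_eq_iff by blast
  obtain G where G: "G \<subseteq> F \<and> span (Z \<union> G) = UNIV"
    and Gmin: "\<And>G'. G' \<subseteq> F \<and> span (Z \<union> G') = UNIV \<Longrightarrow> card G \<le> card G'"
    using ex_has_least_nat[of "\<lambda>G. G \<subseteq> F \<and> span (Z \<union> G) = UNIV" F card] F by blast
  have finG: "finite G" using G F finite_subset by blast
  define Zg where "Zg g = span (Z \<union> (G - {g}))" for g
  have Zg_sub: "subspace (Zg g)" for g unfolding Zg_def by simp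
  have Zg_cl: "closed (Zg g)" for g unfolding Zg_def using closed_span_Un_finite[OF cl sub] finG by simp
  have Z_Zg: "Z \<subseteq> Zg g" for g unfolding Zg_def by (meson Un_subset_iff span_superset)
  have G_Zg: "v \<in> G - {g} \<Longrightarrow> v \<in> Zg g" for v g unfolding Zg_def by (rule span_base) blast
  have g_notin: "g \<notin> Zg g" if "g \<in> G" for g
  proof
    assume gin: "g \<in> Zg g"
    have "Z \<union> G \<subseteq> Zg g" using Z_Zg[of g] G_Zg[of _ g] gin by blast
    then have "span (Z \<union> G) \<subseteq> Zg g" using span_minimal Zg_sub by blast
    then have "span (Z \<union> (G - {g})) = UNIV" using G unfolding Zg_def by auto
    then have "card G \<le> card (G - {g})" using Gmin G by blast
    moreover have "card (G - {g}) < card G" by (rule card_Diff1_less[OF finG that])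
    ultimately show False by simp
  qed
  have ex: "\<exists>k. x - k *\<^sub>R g \<in> Zg g" if "g \<in> G" for g x
  proof -
    have "Z \<union> G \<subseteq> span (insert g (Zg g))"
      using Z_Zg[of g] G_Zg[of _ g] span_superset[of "insert g (Zg g)"] by blast
    then have "span (Z \<union> G) \<subseteq> span (insert g (Zg g))" using span_minimal subspace_span by blast
    then have "x \<in> span (insert g (Zg g))" using G by auto
    moreover have "span (Zg g) = Zg g" using Zg_sub span_eq_iff by blast
    ultimately show ?thesis using span_insert[of g "Zg g"] by auto
  qed
  have uniq: "k = k'" if "g \<in> G" "x - k *\<^sub>R g \<in> Zg g" "x - k' *\<^sub>R g \<in> Zg g" for g x k k'
  proof (rule ccontr)
    assume "k \<noteq> k'"
    have "(x - k *\<^sub>R g) - (x - k' *\<^sub>R g) \<in> Zg g" using that Zg_sub subspace_diff by blast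
    then have "(k' - k) *\<^sub>R g \<in> Zg g" by (simp add: algebra_simps)
    then have "(1 / (k' - k)) *\<^sub>R ((k' - k) *\<^sub>R g) \<in> Zg g" using Zg_sub subspace_scale by blast
    then have "g \<in> Zg g" using \<open>k \<noteq> k'\<close> by simp
    then show False using g_notin that by blast
  qed
  define \<psi> where "\<psi> g x = (THE k. x - k *\<^sub>R g \<in> Zg g)" for g x
  have psi: "x - \<psi> g x *\<^sub>R g \<in> Zg g" if "g \<in> G" for g x
    unfolding \<psi>_def using ex[OF that] uniq[OF that] by (metis theI)
  have psi_eq: "\<psi> g x = k" if "g \<in> G" "x - k *\<^sub>R g \<in> Zg g" for g x k
    using uniq[OF that(1) psi[OF that(1)] that(2)] .
  have psi_bl: "bounded_linear (\<psi> g)" if g: "g \<in> G" for g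
  proof (rule closed_kernel_bounded)
    fix x y
    have "(x - \<psi> g x *\<^sub>R g) + (y - \<psi> g y *\<^sub>R g) \<in> Zg g" using psi[OF g] Zg_sub subspace_add by blast
    then have "(x + y) - (\<psi> g x + \<psi> g y) *\<^sub>R g \<in> Zg g" by (simp add: algebra_simps)
    then show "\<psi> g (x + y) = \<psi> g x + \<psi> g y" using psi_eq[OF g] by blast
  next
    fix c x
    have "c *\<^sub>R (x - \<psi> g x *\<^sub>R g) \<in> Zg g" using psi[OF g] Zg_sub subspace_scale by blast
    then have "c *\<^sub>R x - (c * \<psi> g x) *\<^sub>R g \<in> Zg g" by (simp add: algebra_simps)
    then show "\<psi> g (c *\<^sub>R x) = c * \<psi> g x" using psi_eq[OF g] by blast
  next
    have "{x. \<psi> g x = 0} = Zg g"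
    proof
      show "{x. \<psi> g x = 0} \<subseteq> Zg g"
      proof
        fix x assume "x \<in> {x. \<psi> g x = 0}"
        then show "x \<in> Zg g" using psi[OF g, of x] by simp
      qed
      show "Zg g \<subseteq> {x. \<psi> g x = 0}" using psi_eq[OF g, of _ 0] by auto
    qed
    then show "closed {x. \<psi> g x = 0}" using Zg_cl by simp
  qed
  have decomp: "x - (\<Sum>g\<in>G. \<psi> g x *\<^sub>R g) \<in> Z" for x
  proof -
    have "x \<in> span (Z \<union> G)" using G by auto
    then obtain a b where ab: "x = a + b" "a \<in> span Z" "b \<in> span G" using span_Un[of Z G] by blast
    obtain u where u: "b = (\<Sum>v\<in>G. u v *\<^sub>R v)" using ab(3) span_finite[OF finG] by auto
    have aZ: "a \<in> Z" using ab(2) spZ by simp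
    have "\<psi> g x = u g" if g: "g \<in> G" for g
    proof (rule psi_eq[OF g])
      have "b = u g *\<^sub>R g + (\<Sum>v\<in>G - {g}. u v *\<^sub>R v)" using u finG g by (simp add: sum.remove)
      then have "x - u g *\<^sub>R g = a + (\<Sum>v\<in>G - {g}. u v *\<^sub>R v)" using ab by simp
      moreover have "(\<Sum>v\<in>G - {g}. u v *\<^sub>R v) \<in> Zg g"
        using G_Zg Zg_sub by (intro subspace_sum) (auto intro: subspace_scale)
      moreover have "a \<in> Zg g" using aZ Z_Zg by blast
      ultimately show "x - u g *\<^sub>R g \<in> Zg g" using Zg_sub subspace_add by metis
    qed
    then have "(\<Sum>g\<in>G. \<psi> g x *\<^sub>R g) = b" using u by simp
    then show ?thesis using ab aZ by simp
  qed
  have lim: "(\<lambda>m. \<Sum>g\<in>G. \<bar>\<psi> g (y m)\<bar> * norm g) \<longlonglongrightarrow> 0"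
  proof -
    have "(\<lambda>m. \<bar>\<psi> g (y m)\<bar> * norm g) \<longlonglongrightarrow> 0" if "g \<in> G" for g
    proof -
      have "(\<lambda>m. \<psi> g (y m)) \<longlonglongrightarrow> 0" using wn psi_bl[OF that] unfolding weakly_null_def by blast
      then have "(\<lambda>m. \<bar>\<psi> g (y m)\<bar>) \<longlonglongrightarrow> 0" by (rule tendsto_rabs_zero)
      then show ?thesis by (rule tendsto_mult_left_zero)
    qed
    then show ?thesis using tendsto_sum[of G "\<lambda>g m. \<bar>\<psi> g (y m)\<bar> * norm g" "\<lambda>_. 0"] by simp
  qed
  then have "eventually (\<lambda>m. (\<Sum>g\<in>G. \<bar>\<psi> g (y m)\<bar> * norm g) < \<delta>) sequentially"
    using order_tendstoD(2) dpos by blast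
  then show ?thesis
  proof (rule eventually_mono)
    fix m assume lt: "(\<Sum>g\<in>G. \<bar>\<psi> g (y m)\<bar> * norm g) < \<delta>"
    define z where "z = y m - (\<Sum>g\<in>G. \<psi> g (y m) *\<^sub>R g)"
    have "z \<in> Z" unfolding z_def using decomp .
    moreover have "norm (y m - z) \<le> (\<Sum>g\<in>G. \<bar>\<psi> g (y m)\<bar> * norm g)"
      unfolding z_def using norm_sum[of "\<lambda>g. \<psi> g (y m) *\<^sub>R g" G] by simp
    ultimately show "\<exists>z\<in>Z. norm (y m - z) < \<delta>" using lt by force
  qed
qed

locale arr = ufilt F for F +
  fixes N :: nat and yy :: "nat \<Rightarrow> nat \<Rightarrow> 'a::banach"
  assumes Npos: "N > 0" and yunit: "\<And>i m. i < N \<Longrightarrow> norm (yy i m) = 1"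
    and wnull: "\<And>i. i < N \<Longrightarrow> weakly_null (yy i)"
begin

primrec V :: "nat \<Rightarrow> (nat \<Rightarrow> real) \<Rightarrow> 'a \<Rightarrow> real" where
  "V 0 a u = norm u"
| "V (Suc j) a u = Lim F (\<lambda>m. V j a (u + a (N - Suc j) *\<^sub>R yy (N - Suc j) m))"

definition D :: "(nat \<Rightarrow> real) \<Rightarrow> (nat \<Rightarrow> real) \<Rightarrow> real" where
  "D a b = (\<Sum>i<N. \<bar>a i - b i\<bar>)"

lemma idx_lt: "N - Suc j < N" using Npos by simp

lemma D_ge: "i < N \<Longrightarrow> \<bar>a i - b i\<bar> \<le> D a b"
  unfolding D_def by (rule member_le_sum) auto

lemma D_nonneg: "0 \<le> D a b" unfolding D_def by (simp add: sum_nonneg)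

lemma V_zero: "V j (\<lambda>_. 0) 0 = 0"
  by (induction j) simp_all

lemma Vlip: "\<bar>V j a u - V j b v\<bar> \<le> norm (u - v) + real j * D a b"
proof (induction j arbitrary: u v a b)
  case 0 then show ?case by (simp add: norm_triangle_ineq3)
next
  case (Suc j)
  define i where "i = N - Suc j"
  have i: "i < N" unfolding i_def by (rule idx_lt)
  have bd: "bnd (\<lambda>m. V j c (w + t *\<^sub>R yy i m))" for c w t
    unfolding bnd_def
  proof (intro exI allI)
    fix m
    have "\<bar>V j c (w + t *\<^sub>R yy i m) - V j (\<lambda>_. 0) 0\<bar> \<le> norm (w + t *\<^sub>R yy i m - 0) + real j * D c (\<lambda>_. 0)"
      by (rule Suc.IH)
    also have "norm (w + t *\<^sub>R yy i m - 0) \<le> norm w + \<bar>t\<bar>"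
      using norm_triangle_ineq[of w "t *\<^sub>R yy i m"] yunit[OF i] by simp
    finally show "\<bar>V j c (w + t *\<^sub>R yy i m)\<bar> \<le> norm w + \<bar>t\<bar> + real j * D c (\<lambda>_. 0)"
      by (simp add: V_zero)
  qed
  have "\<bar>V j a (u + a i *\<^sub>R yy i m) - V j b (v + b i *\<^sub>R yy i m)\<bar> \<le> norm (u - v) + real (Suc j) * D a b" for m
  proof -
    have "\<bar>V j a (u + a i *\<^sub>R yy i m) - V j b (v + b i *\<^sub>R yy i m)\<bar>
        \<le> norm ((u + a i *\<^sub>R yy i m) - (v + b i *\<^sub>R yy i m)) + real j * D a b" by (rule Suc.IH)
    also have "(u + a i *\<^sub>R yy i m) - (v + b i *\<^sub>R yy i m) = (u - v) + (a i - b i) *\<^sub>R yy i m"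
      by (simp add: algebra_simps)
    also have "norm \<dots> \<le> norm (u - v) + \<bar>a i - b i\<bar>"
      using norm_triangle_ineq[of "u - v" "(a i - b i) *\<^sub>R yy i m"] yunit[OF i] by simp
    also have "\<bar>a i - b i\<bar> \<le> D a b" using D_ge[OF i] .
    finally show ?thesis by (simp add: algebra_simps)
  qed
  then show ?case unfolding V.simps i_def[symmetric] by (intro ulim_dist bd)
qed

lemma bnd_V: "i < N \<Longrightarrow> bnd (\<lambda>m. V j c (w + t *\<^sub>R yy i m))"
  unfolding bnd_def
proof (intro exI allI)
  fix m assume i: "i < N"
  have "\<bar>V j c (w + t *\<^sub>R yy i m) - V j (\<lambda>_. 0) 0\<bar> \<le> norm (w + t *\<^sub>R yy i m - 0) + real j * D c (\<lambda>_. 0)"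
    by (rule Vlip)
  also have "norm (w + t *\<^sub>R yy i m - 0) \<le> norm w + \<bar>t\<bar>"
    using norm_triangle_ineq[of w "t *\<^sub>R yy i m"] yunit[OF i] by simp
  finally show "\<bar>V j c (w + t *\<^sub>R yy i m)\<bar> \<le> norm w + \<bar>t\<bar> + real j * D c (\<lambda>_. 0)"
    by (simp add: V_zero)
qed

lemma V_Suc: "V (Suc j) a u = Lim F (\<lambda>m. V j a (u + a (N - Suc j) *\<^sub>R yy (N - Suc j) m))"
  by simp

lemma V_tendsto: "((\<lambda>m. V j a (u + a (N - Suc j) *\<^sub>R yy (N - Suc j) m)) \<longlongrightarrow> V (Suc j) a u) F"
  unfolding V_Suc by (rule ulim_tendsto, rule bnd_V, rule idx_lt)

lemma V_nonneg: "V j a u \<ge> 0"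
proof (induction j arbitrary: u)
  case 0 then show ?case by simp
next
  case (Suc j)
  have "Lim F (\<lambda>m. 0) \<le> Lim F (\<lambda>m. V j a (u + a (N - Suc j) *\<^sub>R yy (N - Suc j) m))"
    by (rule ulim_le) (auto intro: bnd_V idx_lt Suc.IH)
  then show ?case by simp
qed

lemma V_hom: "V j (\<lambda>i. c * a i) (c *\<^sub>R u) = \<bar>c\<bar> * V j a u"
proof (induction j arbitrary: u)
  case 0 then show ?case by simp
next
  case (Suc j)
  define i where "i = N - Suc j"
  have i: "i < N" unfolding i_def by (rule idx_lt)
  have "V (Suc j) (\<lambda>i. c * a i) (c *\<^sub>R u) = Lim F (\<lambda>m. V j (\<lambda>i. c * a i) (c *\<^sub>R (u + a i *\<^sub>R yy i m)))"
    unfolding V_Suc i_def[symmetric] by (simp add: algebra_simps)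
  also have "\<dots> = Lim F (\<lambda>m. \<bar>c\<bar> * V j a (u + a i *\<^sub>R yy i m))" by (simp add: Suc.IH)
  also have "\<dots> = \<bar>c\<bar> * V (Suc j) a u"
    unfolding V_Suc i_def[symmetric] by (rule ulim_cmult, rule bnd_V[OF i])
  finally show ?case .
qed

lemma V_tri: "V j (\<lambda>i. a i + b i) (u + v) \<le> V j a u + V j b v"
proof (induction j arbitrary: u v)
  case 0 then show ?case by (simp add: norm_triangle_ineq)
next
  case (Suc j)
  define i where "i = N - Suc j"
  have i: "i < N" unfolding i_def by (rule idx_lt)
  have "V (Suc j) (\<lambda>i. a i + b i) (u + v) = Lim F (\<lambda>m. V j (\<lambda>i. a i + b i) ((u + a i *\<^sub>R yy i m) + (v + b i *\<^sub>R yy i m)))"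
    unfolding V_Suc i_def[symmetric] by (simp add: algebra_simps)
  also have "\<dots> \<le> Lim F (\<lambda>m. V j a (u + a i *\<^sub>R yy i m) + V j b (v + b i *\<^sub>R yy i m))"
  proof (rule ulim_le)
    show "bnd (\<lambda>m. V j (\<lambda>i. a i + b i) (u + a i *\<^sub>R yy i m + (v + b i *\<^sub>R yy i m)))"
    proof -
      have "bnd (\<lambda>m. V j (\<lambda>i. a i + b i) ((u + v) + (a i + b i) *\<^sub>R yy i m))" by (rule bnd_V[OF i])
      moreover have "(u + v) + (a i + b i) *\<^sub>R yy i m = u + a i *\<^sub>R yy i m + (v + b i *\<^sub>R yy i m)" for m
        by (simp add: algebra_simps)
      ultimately show ?thesis by simp
    qed
  qed (auto intro: bnd_add bnd_V[OF i] Suc.IH)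
  also have "\<dots> = V (Suc j) a u + V (Suc j) b v"
    unfolding V_Suc i_def[symmetric] by (rule ulim_add; rule bnd_V[OF i])
  finally show ?case .
qed

lemma norm_lim_low:
  assumes i: "i < N"
  shows "norm u \<le> Lim F (\<lambda>m. norm (u + t *\<^sub>R yy i m))"
proof -
  obtain \<phi> where \<phi>: "bounded_linear \<phi>" "\<phi> u = norm u" "\<And>x. \<bar>\<phi> x\<bar> \<le> norm x"
    using norming_functional[of u] by blast
  have "(\<lambda>m. \<phi> (yy i m)) \<longlonglongrightarrow> 0" using wnull[OF i] \<phi>(1) unfolding weakly_null_def by blast
  then have "(\<lambda>m. norm u + t * \<phi> (yy i m)) \<longlonglongrightarrow> norm u + t * 0"
    by (intro tendsto_intros)
  then have l1: "((\<lambda>m. norm u + t * \<phi> (yy i m)) \<longlongrightarrow> norm u) F"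
    using tendsto_mono[OF Fseq] by simp
  have b: "bnd (\<lambda>m. norm (u + t *\<^sub>R yy i m))"
    unfolding bnd_def
  proof (intro exI allI)
    fix m show "\<bar>norm (u + t *\<^sub>R yy i m)\<bar> \<le> norm u + \<bar>t\<bar>"
      using norm_triangle_ineq[of u "t *\<^sub>R yy i m"] yunit[OF i] by simp
  qed
  have le: "norm u + t * \<phi> (yy i m) \<le> norm (u + t *\<^sub>R yy i m)" for m
  proof -
    have "\<phi> (u + t *\<^sub>R yy i m) = norm u + t * \<phi> (yy i m)"
      using \<phi>(1,2) by (simp add: linear_add linear_scale bounded_linear.linear)
    moreover have "\<phi> (u + t *\<^sub>R yy i m) \<le> norm (u + t *\<^sub>R yy i m)" using \<phi>(3) abs_le_D1 by blast
    ultimately show ?thesis by simp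
  qed
  show ?thesis
    by (rule tendsto_le[OF Fnb ulim_tendsto[OF b] l1]) (simp add: le)
qed

lemma V_low: "norm u \<le> V j a u"
proof (induction j arbitrary: u)
  case 0 then show ?case by simp
next
  case (Suc j)
  define i where "i = N - Suc j"
  have i: "i < N" unfolding i_def by (rule idx_lt)
  have "norm u \<le> Lim F (\<lambda>m. norm (u + a i *\<^sub>R yy i m))" by (rule norm_lim_low[OF i])
  also have "\<dots> \<le> Lim F (\<lambda>m. V j a (u + a i *\<^sub>R yy i m))"
  proof (rule ulim_le)
    show "bnd (\<lambda>m. norm (u + a i *\<^sub>R yy i m))"
      unfolding bnd_def
    proof (intro exI allI)
      fix m show "\<bar>norm (u + a i *\<^sub>R yy i m)\<bar> \<le> norm u + \<bar>a i\<bar>"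
        using norm_triangle_ineq[of u "a i *\<^sub>R yy i m"] yunit[OF i] by simp
    qed
  qed (auto intro: bnd_V[OF i] Suc.IH)
  finally show ?case unfolding V_Suc i_def[symmetric] .
qed

lemma V_skip: "a (N - Suc j) = 0 \<Longrightarrow> V (Suc j) a u = V j a u"
  by simp

lemma V_zero_tail: "(\<And>i. N - j \<le> i \<Longrightarrow> a i = 0) \<Longrightarrow> V j a u = norm u"
proof (induction j arbitrary: u)
  case 0 then show ?case by simp
next
  case (Suc j)
  have "a (N - Suc j) = 0" using Suc.prems by simp
  then have "V (Suc j) a u = V j a u" by (rule V_skip)
  also have "\<dots> = norm u" using Suc.IH Suc.prems by simp
  finally show ?case .
qed

definition P :: "nat \<Rightarrow> (nat \<Rightarrow> real) \<Rightarrow> nat \<Rightarrow> real" where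
  "P m a = (\<lambda>i. if i < m then a i else 0)"

lemma V_mono: "m \<le> n \<Longrightarrow> V j (P m a) u \<le> V j (P n a) u"
proof (induction j arbitrary: u)
  case 0 then show ?case by simp
next
  case (Suc j)
  define i where "i = N - Suc j"
  have i: "i < N" unfolding i_def by (rule idx_lt)
  show ?case
  proof (cases "i < m")
    case True
    then have eq: "P m a i = P n a i" using Suc.prems unfolding P_def by simp
    have "Lim F (\<lambda>m'. V j (P m a) (u + P m a i *\<^sub>R yy i m')) \<le> Lim F (\<lambda>m'. V j (P n a) (u + P n a i *\<^sub>R yy i m'))"
      unfolding eq by (rule ulim_le) (auto intro: bnd_V[OF i] Suc.IH Suc.prems)
    then show ?thesis unfolding V_Suc i_def[symmetric] .
  next
    case False
    have "V (Suc j) (P m a) u = norm u"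
      by (rule V_zero_tail) (use False in \<open>auto simp: P_def i_def\<close>)
    also have "\<dots> \<le> V (Suc j) (P n a) u" by (rule V_low)
    finally show ?thesis .
  qed
qed

definition E :: "(nat \<Rightarrow> real) \<Rightarrow> real" where
  "E a = V N a 0"

lemma E_unit:
  assumes j: "j < N"
  shows "E (unit_vec j) = 1"
proof -
  let ?e = "unit_vec j"
  have step: "V (N - j + d) ?e 0 = V (N - j) ?e 0" if "d \<le> j" for d
    using that
  proof (induction d)
    case 0 then show ?case by simp
  next
    case (Suc d)
    have "?e (N - Suc (N - j + d)) = 0"
      using Suc.prems j unfolding unit_vec_def by auto
    then have "V (Suc (N - j + d)) ?e 0 = V (N - j + d) ?e 0" by (rule V_skip)
    then show ?case using Suc by simp
  qed
  have "E ?e = V (N - j) ?e 0" unfolding E_def using step[of j] j by simp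
  also have "N - j = Suc (N - Suc j)" using j by simp
  also have "V (Suc (N - Suc j)) ?e 0 = Lim F (\<lambda>m. V (N - Suc j) ?e (0 + ?e j *\<^sub>R yy j m))"
    unfolding V_Suc using j by (simp add: Suc_diff_Suc)
  also have "\<dots> = Lim F (\<lambda>m. 1)"
  proof -
    have "V (N - Suc j) ?e (0 + ?e j *\<^sub>R yy j m) = 1" for m
    proof -
      have "V (N - Suc j) ?e (0 + ?e j *\<^sub>R yy j m) = norm (0 + ?e j *\<^sub>R yy j m)"
        by (rule V_zero_tail) (use j in \<open>auto simp: unit_vec_def\<close>)
      then show ?thesis using yunit[OF j] by (simp add: unit_vec_def)
    qed
    then show ?thesis by simp
  qed
  finally show ?thesis by simp
qed

end

lemma grid_finite:
  fixes N M :: nat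
  shows "finite {b. \<forall>i. (i \<in> {..<N} \<longrightarrow> b i \<in> (\<lambda>z. real_of_int z / real M) ` {- int M..int M}) \<and> (i \<notin> {..<N} \<longrightarrow> b i = 0)}"
  by (rule finite_set_of_finite_funs) auto

lemma grid_approx:
  fixes N M :: nat
  assumes M: "M > 0" and a: "\<And>i. i < N \<Longrightarrow> \<bar>a i\<bar> \<le> 1"
  shows "\<exists>b \<in> {b. \<forall>i. (i \<in> {..<N} \<longrightarrow> b i \<in> (\<lambda>z. real_of_int z / real M) ` {- int M..int M}) \<and> (i \<notin> {..<N} \<longrightarrow> b i = 0)}.
           \<forall>i<N. \<bar>a i - b i\<bar> \<le> 1 / real M"
proof -
  define b where "b i = (if i < N then real_of_int \<lfloor>a i * real M\<rfloor> / real M else 0)" for i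
  have Mr: "real M > 0" using M by simp
  have inR: "b i \<in> (\<lambda>z. real_of_int z / real M) ` {- int M..int M}" if i: "i < N" for i
  proof -
    have h: "- 1 \<le> a i" "a i \<le> 1" using a[OF i] by (simp_all add: abs_le_iff)
    have "(- 1) * real M \<le> a i * real M" by (rule mult_right_mono[OF h(1)]) simp
    then have l1: "real_of_int (- int M) \<le> a i * real M" by simp
    have l2: "a i * real M \<le> 1 * real M" by (rule mult_right_mono[OF h(2)]) simp
    have "- int M \<le> \<lfloor>a i * real M\<rfloor>" using l1 by (simp only: le_floor_iff)
    moreover have "\<lfloor>a i * real M\<rfloor> \<le> \<lfloor>real M\<rfloor>" using l2 by (intro floor_mono) simp
    ultimately have "- int M \<le> \<lfloor>a i * real M\<rfloor>" "\<lfloor>a i * real M\<rfloor> \<le> int M" by simp_all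
    then show ?thesis unfolding b_def using i by auto
  qed
  have close: "\<bar>a i - b i\<bar> \<le> 1 / real M" if i: "i < N" for i
  proof -
    have f1: "real_of_int \<lfloor>a i * real M\<rfloor> \<le> a i * real M" by (rule of_int_floor_le)
    have f2: "a i * real M < real_of_int \<lfloor>a i * real M\<rfloor> + 1" by (rule real_of_int_floor_add_one_gt)
    have "a i - b i = (a i * real M - real_of_int \<lfloor>a i * real M\<rfloor>) / real M"
      unfolding b_def using i Mr by (simp add: field_simps)
    moreover have "0 \<le> (a i * real M - real_of_int \<lfloor>a i * real M\<rfloor>) / real M" using f1 Mr by simp
    moreover have "(a i * real M - real_of_int \<lfloor>a i * real M\<rfloor>) / real M \<le> 1 / real M"
    proof (rule divide_right_mono)
      show "a i * real M - real_of_int \<lfloor>a i * real M\<rfloor> \<le> 1" using f2 by linarith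
    qed simp
    ultimately show ?thesis by simp
  qed
  show ?thesis using inR close unfolding b_def by (intro bexI[of _ b]) (auto simp: b_def)
qed

context arr
begin

lemma E_nonneg: "E a \<ge> 0" unfolding E_def by (rule V_nonneg)

lemma E_hom: "E (\<lambda>i. c * a i) = \<bar>c\<bar> * E a"
  unfolding E_def using V_hom[of N c a 0] by simp

lemma E_tri: "E (\<lambda>i. a i + b i) \<le> E a + E b"
  unfolding E_def using V_tri[of N a b 0 0] by simp

lemma E_zero: "E (\<lambda>_. 0) = 0" unfolding E_def by (rule V_zero)

lemma E_mono: "m \<le> n \<Longrightarrow> E (P m a) \<le> E (P n a)"
  unfolding E_def by (rule V_mono)

lemma P_N: "supp_in N a \<Longrightarrow> P N a = a"
  unfolding P_def supp_in_def by (auto simp: not_less)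

lemma coef_le:
  assumes s: "supp_in N a" and i: "i < N"
  shows "\<bar>a i\<bar> \<le> 2 * E a"
proof -
  have eq: "(\<lambda>l. a i * unit_vec i l) = (\<lambda>l. P (Suc i) a l + (- 1) * P i a l)"
    unfolding P_def unit_vec_def by (auto simp: fun_eq_iff less_Suc_eq)
  have "\<bar>a i\<bar> = E (\<lambda>l. a i * unit_vec i l)" using E_hom[of "a i" "unit_vec i"] E_unit[OF i] by simp
  also have "\<dots> \<le> E (P (Suc i) a) + E (\<lambda>l. (- 1) * P i a l)" unfolding eq by (rule E_tri)
  also have "E (\<lambda>l. (- 1) * P i a l) = E (P i a)" using E_hom[of "-1" "P i a"] by simp
  also have "E (P (Suc i) a) \<le> E (P N a)" using i by (intro E_mono) simp
  also have "E (P i a) \<le> E (P N a)" using i by (intro E_mono) simp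
  finally show ?thesis using P_N[OF s] by simp
qed

lemma E_nmn: "normalized_monotone_norm N E"
  unfolding normalized_monotone_norm_def is_norm_on_def
proof (intro conjI allI impI)
  fix a assume s: "supp_in N a"
  show "0 \<le> E a" by (rule E_nonneg)
  show "E a = 0 \<longleftrightarrow> a = (\<lambda>_. 0)"
  proof
    assume "E a = 0"
    then have "a i = 0" for i
      using coef_le[OF s, of i] s unfolding supp_in_def by (cases "i < N") auto
    then show "a = (\<lambda>_. 0)" by auto
  qed (simp add: E_zero)
next
  fix a c show "E (\<lambda>i. c * a i) = \<bar>c\<bar> * E a" by (rule E_hom)
next
  fix a b show "E (\<lambda>i. a i + b i) \<le> E a + E b" by (rule E_tri)
next
  fix j assume "j < N" then show "E (unit_vec j) = 1" by (rule E_unit)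
next
  fix a m n assume "supp_in N a" "m \<le> n" "n \<le> N"
  then show "E (\<lambda>i. if i < m then a i else 0) \<le> E (\<lambda>i. if i < n then a i else 0)"
    using E_mono[of m n a] unfolding P_def by simp
qed

end

context arr
begin

lemma sum_diff_norm:
  assumes "k \<le> N" "\<And>i. i < k \<Longrightarrow> norm (x i) = 1"
  shows "norm ((\<Sum>i<k. a i *\<^sub>R x i) - (\<Sum>i<k. b i *\<^sub>R x i)) \<le> D a b"
proof -
  have "(\<Sum>i<k. a i *\<^sub>R x i) - (\<Sum>i<k. b i *\<^sub>R x i) = (\<Sum>i<k. (a i - b i) *\<^sub>R x i)"
    by (simp add: sum_subtractf algebra_simps)
  also have "norm \<dots> \<le> (\<Sum>i<k. norm ((a i - b i) *\<^sub>R x i))" by (rule norm_sum)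
  also have "\<dots> = (\<Sum>i<k. \<bar>a i - b i\<bar>)" using assms(2) by simp
  also have "\<dots> \<le> (\<Sum>i<N. \<bar>a i - b i\<bar>)" using assms(1) by (intro sum_mono2) auto
  finally show ?thesis unfolding D_def .
qed

lemma game_step:
  assumes k: "k < N" and xu: "\<And>i. i < k \<Longrightarrow> norm (x i) = 1" and Z: "fin_codim_closed_subspace Z"
    and \<delta>: "0 < \<delta>" "\<delta> \<le> 1"
  shows "\<exists>v\<in>Z. norm v = 1 \<and> (\<forall>a. supp_in N a \<longrightarrow> D a (\<lambda>_. 0) \<le> 1 \<longrightarrow>
     \<bar>V (N - Suc k) a ((\<Sum>i<k. a i *\<^sub>R x i) + a k *\<^sub>R v) - V (N - k) a (\<Sum>i<k. a i *\<^sub>R x i)\<bar> \<le> \<delta>)"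
proof -
  define j where "j = N - Suc k"
  have jk: "N - k = Suc j" "N - Suc j = k" "j \<le> N" using k unfolding j_def by auto
  have Zsub: "subspace Z" using Z unfolding fin_codim_closed_subspace_def by blast
  define M :: nat where "M = nat \<lceil>(4 * real N + 8) * real N / \<delta>\<rceil> + 1"
  have Mpos: "M > 0" unfolding M_def by simp
  have Mge: "(4 * real N + 8) * real N / \<delta> \<le> real M" unfolding M_def by linarith
  have Merr: "(2 * real N + 4) * (real N / real M) \<le> \<delta> / 2"
  proof -
    have "(4 * real N + 8) * real N \<le> \<delta> * real M" using Mge \<delta> by (simp add: field_simps)
    then show ?thesis using Mpos \<delta> by (simp add: field_simps)
  qed
  define G where "G = {b. \<forall>i. (i \<in> {..<N} \<longrightarrow> b i \<in> (\<lambda>z. real_of_int z / real M) ` {- int M..int M}) \<and> (i \<notin> {..<N} \<longrightarrow> b i = (0::real))}"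
  have finG: "finite G" unfolding G_def by (rule grid_finite)
  define u where "u c = (\<Sum>i<k. c i *\<^sub>R x i)" for c
  have ev1: "eventually (\<lambda>m. \<forall>b\<in>G. \<bar>V j b (u b + b k *\<^sub>R yy k m) - V (Suc j) b (u b)\<bar> < \<delta> / 4) F"
  proof (rule eventually_ball_finite[OF finG], intro ballI)
    fix b
    have "((\<lambda>m. V j b (u b + b (N - Suc j) *\<^sub>R yy (N - Suc j) m)) \<longlongrightarrow> V (Suc j) b (u b)) F"
      by (rule V_tendsto)
    then have "eventually (\<lambda>m. dist (V j b (u b + b k *\<^sub>R yy k m)) (V (Suc j) b (u b)) < \<delta> / 4) F"
      unfolding jk using \<delta> by (intro tendstoD) auto
    then show "eventually (\<lambda>m. \<bar>V j b (u b + b k *\<^sub>R yy k m) - V (Suc j) b (u b)\<bar> < \<delta> / 4) F"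
      by (simp add: dist_real_def)
  qed
  have ev2: "eventually (\<lambda>m. \<exists>z\<in>Z. norm (yy k m - z) < \<delta> / 8) F"
    by (rule ev_seq, rule weakly_null_near[OF Z wnull[OF k]]) (use \<delta> in simp)
  obtain m where m1: "\<forall>b\<in>G. \<bar>V j b (u b + b k *\<^sub>R yy k m) - V (Suc j) b (u b)\<bar> < \<delta> / 4"
    and m2: "\<exists>z\<in>Z. norm (yy k m - z) < \<delta> / 8"
    using ev_ex[OF eventually_conj[OF ev1 ev2], of 0] by blast
  define y where "y = yy k m"
  have ny: "norm y = 1" unfolding y_def by (rule yunit[OF k])
  obtain z where z: "z \<in> Z" "norm (y - z) < \<delta> / 8" using m2 unfolding y_def by blast
  have nz_ge: "norm y - norm z \<le> norm (y - z)" "norm z - norm y \<le> norm (y - z)"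
    using norm_triangle_ineq2[of y z] norm_triangle_ineq2[of z y] by (simp_all add: norm_minus_commute)
  have zpos: "norm z > 0" using nz_ge ny z \<delta> by linarith
  define v where "v = (1 / norm z) *\<^sub>R z"
  have vZ: "v \<in> Z" unfolding v_def using Zsub z(1) by (rule subspace_scale)
  have nv: "norm v = 1" unfolding v_def using zpos by simp
  have vy: "norm (v - y) \<le> \<delta> / 4"
  proof -
    have "v - z = (1 / norm z - 1) *\<^sub>R z" unfolding v_def by (simp add: algebra_simps)
    then have "norm (v - z) = \<bar>1 / norm z - 1\<bar> * norm z" by simp
    also have "\<dots> = \<bar>(1 / norm z - 1) * norm z\<bar>" by (simp add: abs_mult)
    also have "(1 / norm z - 1) * norm z = 1 - norm z" using zpos by (simp add: field_simps)
    also have "\<bar>1 - norm z\<bar> \<le> norm (y - z)" using nz_ge ny by simp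
    finally have "norm (v - z) \<le> norm (y - z)" .
    moreover have "norm (v - y) \<le> norm (v - z) + norm (y - z)"
      using norm_triangle_ineq4[of "v - z" "y - z"] by simp
    ultimately show ?thesis using z by simp
  qed
  have main: "\<bar>V j a (u a + a k *\<^sub>R v) - V (Suc j) a (u a)\<bar> \<le> \<delta>"
    if s: "supp_in N a" and D1: "D a (\<lambda>_. 0) \<le> 1" for a
  proof -
    have a1: "\<bar>a i\<bar> \<le> 1" if "i < N" for i using D_ge[OF that, of a "\<lambda>_. 0"] D1 by simp
    obtain b where bG: "b \<in> G" and ab: "\<forall>i<N. \<bar>a i - b i\<bar> \<le> 1 / real M"
    proof -
      have "\<exists>b \<in> G. \<forall>i<N. \<bar>a i - b i\<bar> \<le> 1 / real M"
        unfolding G_def by (rule grid_approx[OF Mpos]) (rule a1)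
      then show ?thesis using that by blast
    qed
    have Dab: "D a b \<le> real N / real M"
    proof -
      have "D a b \<le> (\<Sum>i<N. 1 / real M)" unfolding D_def using ab by (intro sum_mono) auto
      then show ?thesis by simp
    qed
    have uab: "norm (u a - u b) \<le> D a b" unfolding u_def using k xu by (intro sum_diff_norm) auto
    have i1: "\<bar>V j a (u a + a k *\<^sub>R v) - V j b (u b + b k *\<^sub>R y)\<bar> \<le> \<delta> / 4 + (real j + 2) * D a b"
    proof -
      have "\<bar>V j a (u a + a k *\<^sub>R v) - V j b (u b + b k *\<^sub>R y)\<bar> \<le> norm ((u a + a k *\<^sub>R v) - (u b + b k *\<^sub>R y)) + real j * D a b"
        by (rule Vlip)
      also have "(u a + a k *\<^sub>R v) - (u b + b k *\<^sub>R y) = (u a - u b) + (a k *\<^sub>R (v - y) + (a k - b k) *\<^sub>R y)"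
        by (simp add: algebra_simps)
      also have "norm \<dots> \<le> norm (u a - u b) + (\<bar>a k\<bar> * norm (v - y) + \<bar>a k - b k\<bar>)"
        using norm_triangle_ineq[of "u a - u b" "a k *\<^sub>R (v - y) + (a k - b k) *\<^sub>R y"]
          norm_triangle_ineq[of "a k *\<^sub>R (v - y)" "(a k - b k) *\<^sub>R y"] ny by simp
      also have "\<bar>a k\<bar> * norm (v - y) \<le> 1 * (\<delta> / 4)"
        using a1[OF k] vy by (intro mult_mono) auto
      also have "\<bar>a k - b k\<bar> \<le> D a b" by (rule D_ge[OF k])
      finally show ?thesis using uab by (simp add: algebra_simps)
    qed
    have i2: "\<bar>V (Suc j) a (u a) - V (Suc j) b (u b)\<bar> \<le> (real j + 2) * D a b"
    proof -
      have "\<bar>V (Suc j) a (u a) - V (Suc j) b (u b)\<bar> \<le> norm (u a - u b) + real (Suc j) * D a b" by (rule Vlip)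
      then show ?thesis using uab by (simp add: algebra_simps)
    qed
    have i3: "\<bar>V j b (u b + b k *\<^sub>R y) - V (Suc j) b (u b)\<bar> < \<delta> / 4" using m1 bG unfolding y_def by blast
    have "(real j + 2) * D a b \<le> (2 * real N + 4) / 2 * (real N / real M)"
    proof (rule mult_mono)
      show "real j + 2 \<le> (2 * real N + 4) / 2" using jk by simp
    qed (use Dab D_nonneg in auto)
    moreover have "(2 * real N + 4) / 2 * (real N / real M) = ((2 * real N + 4) * (real N / real M)) / 2" by simp
    ultimately have "2 * ((real j + 2) * D a b) \<le> \<delta> / 2" using Merr by linarith
    then show ?thesis using i1 i2 i3 by linarith
  qed
  show ?thesis
  proof (intro bexI[OF _ vZ] conjI nv allI impI)
    fix a assume "supp_in N a" "D a (\<lambda>_. 0) \<le> 1"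
    from main[OF this] show "\<bar>V (N - Suc k) a ((\<Sum>i<k. a i *\<^sub>R x i) + a k *\<^sub>R v) - V (N - k) a (\<Sum>i<k. a i *\<^sub>R x i)\<bar> \<le> \<delta>"
      unfolding u_def jk j_def by simp
  qed
qed

end

context arr
begin

lemma sum_scale_coef:
  fixes n :: nat and a :: "nat \<Rightarrow> real" and x :: "nat \<Rightarrow> 'b::real_vector"
  shows "(\<Sum>i<n. (c * a i) *\<^sub>R x i) = c *\<^sub>R (\<Sum>i<n. a i *\<^sub>R x i)"
  by (induction n) (simp_all add: algebra_simps)

lemma abs_err_general:
  assumes xu: "\<And>i. i < N \<Longrightarrow> norm (x i) = 1"
    and err: "\<And>a. supp_in N a \<Longrightarrow> D a (\<lambda>_. 0) \<le> 1 \<Longrightarrow> \<bar>norm (\<Sum>i<N. a i *\<^sub>R x i) - E a\<bar> \<le> \<eta>"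
    and s: "supp_in N a"
  shows "\<bar>norm (\<Sum>i<N. a i *\<^sub>R x i) - E a\<bar> \<le> \<eta> * D a (\<lambda>_. 0)"
proof (cases "D a (\<lambda>_. 0) = 0")
  case True
  then have "\<forall>i<N. a i = 0" unfolding D_def by (simp add: sum_nonneg_eq_0_iff)
  then have "a = (\<lambda>_. 0)" using s unfolding supp_in_def by (auto simp: fun_eq_iff not_less[symmetric])
  then show ?thesis using E_zero True by simp
next
  case False
  define sa where "sa = D a (\<lambda>_. 0)"
  have sp: "sa > 0" using False D_nonneg[of a "\<lambda>_. 0"] unfolding sa_def by linarith
  define a' where "a' i = (1 / sa) * a i" for i
  have s': "supp_in N a'" using s unfolding supp_in_def a'_def by simp
  have "D a' (\<lambda>_. 0) = (1 / sa) * sa" unfolding sa_def D_def a'_def sum_distrib_left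
    using sp by (intro sum.cong) (auto simp: abs_mult)
  then have D': "D a' (\<lambda>_. 0) \<le> 1" using sp by simp
  have "\<bar>norm (\<Sum>i<N. a' i *\<^sub>R x i) - E a'\<bar> \<le> \<eta>" by (rule err[OF s' D'])
  moreover have "norm (\<Sum>i<N. a' i *\<^sub>R x i) = (1 / sa) * norm (\<Sum>i<N. a i *\<^sub>R x i)"
    unfolding a'_def sum_scale_coef using sp by simp
  moreover have "E a' = (1 / sa) * E a" unfolding a'_def using E_hom[of "1/sa" a] sp by simp
  ultimately have "\<bar>(1 / sa) * (norm (\<Sum>i<N. a i *\<^sub>R x i) - E a)\<bar> \<le> \<eta>" by (simp add: algebra_simps)
  then have "(1 / sa) * \<bar>norm (\<Sum>i<N. a i *\<^sub>R x i) - E a\<bar> \<le> \<eta>" using sp by (simp add: abs_mult)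
  then show ?thesis using sp unfolding sa_def[symmetric] by (simp add: field_simps)
qed

lemma D_le_E: "supp_in N a \<Longrightarrow> D a (\<lambda>_. 0) \<le> 2 * real N * E a"
proof -
  assume s: "supp_in N a"
  have "D a (\<lambda>_. 0) \<le> (\<Sum>i<N. 2 * E a)" unfolding D_def using coef_le[OF s] by (intro sum_mono) auto
  then show ?thesis by simp
qed

lemma final_equiv:
  assumes xu: "\<And>i. i < N \<Longrightarrow> norm (x i) = 1"
    and eps: "\<epsilon> > 0"
    and err: "\<And>a. supp_in N a \<Longrightarrow> D a (\<lambda>_. 0) \<le> 1 \<Longrightarrow>
       \<bar>norm (\<Sum>i<N. a i *\<^sub>R x i) - E a\<bar> \<le> (\<epsilon> / (2 + \<epsilon>)) / (2 * real N)"
  shows "C_equiv N (1 + \<epsilon>) (vec_norm N x) (\<lambda>a. E (\<lambda>i. if i < N then a i else 0))"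
proof -
  define \<theta> where "\<theta> = \<epsilon> / (2 + \<epsilon>)"
  have th: "0 < \<theta>" "\<theta> < 1" "\<theta> * (2 + \<epsilon>) = \<epsilon>" unfolding \<theta>_def using eps by (auto simp: field_simps)
  have Nr: "real N > 0" using Npos by simp
  have rel: "\<bar>norm (\<Sum>i<N. a i *\<^sub>R x i) - E a\<bar> \<le> \<theta> * E a" if s: "supp_in N a" for a
  proof -
    have err': "\<bar>norm (\<Sum>i<N. a i *\<^sub>R x i) - E a\<bar> \<le> \<theta> / (2 * real N)"
      if "supp_in N a" "D a (\<lambda>_. 0) \<le> 1" for a
      unfolding \<theta>_def using that by (rule err)
    have "\<bar>norm (\<Sum>i<N. a i *\<^sub>R x i) - E a\<bar> \<le> (\<theta> / (2 * real N)) * D a (\<lambda>_. 0)"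
      by (rule abs_err_general[OF xu err' s])
    also have "\<dots> \<le> (\<theta> / (2 * real N)) * (2 * real N * E a)"
      using D_le_E[OF s] th Nr by (intro mult_left_mono) auto
    also have "\<dots> = \<theta> * E a" using Nr by simp
    finally show ?thesis .
  qed
  have A: "0 < 1 + \<theta>" and B: "0 < 1 / (1 - \<theta>)" using th by auto
  have "(1 + \<theta>) = (1 + \<epsilon>) * (1 - \<theta>)" using th by (simp add: algebra_simps)
  then have AB: "(1 + \<theta>) * (1 / (1 - \<theta>)) \<le> 1 + \<epsilon>" using th by (simp add: field_simps)
  have main: "1 / (1 + \<theta>) * vec_norm N x a' \<le> E (\<lambda>i. if i < N then a' i else 0) \<and>
      E (\<lambda>i. if i < N then a' i else 0) \<le> 1 / (1 - \<theta>) * vec_norm N x a'"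
    if a'_def: "a' = (\<lambda>i. if i < N then a i else 0)" for a a'
  proof -
    have s: "supp_in N a'" unfolding supp_in_def a'_def by simp
    have rr: "(\<lambda>i. if i < N then a' i else 0) = a'" unfolding a'_def by auto
    have r: "\<bar>vec_norm N x a' - E a'\<bar> \<le> \<theta> * E a'" unfolding vec_norm_def by (rule rel[OF s])
    have Eg: "E a' \<ge> 0" by (rule E_nonneg)
    show ?thesis
      unfolding rr using r th Eg by (simp add: field_simps abs_le_iff)
  qed
  show ?thesis
    unfolding C_equiv_def using A B AB main by blast
qed

end

context arr
begin

lemma game_ind:
  assumes eps: "\<epsilon> > 0" and dd: "\<delta> = (\<epsilon> / (2 + \<epsilon>)) / (2 * real N) / real N"
  shows "k + r = N \<Longrightarrow> (\<forall>i<k. norm (x i) = 1) \<Longrightarrow>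
    (\<forall>a. supp_in N a \<longrightarrow> D a (\<lambda>_. 0) \<le> 1 \<longrightarrow> \<bar>V (N - k) a (\<Sum>i<k. a i *\<^sub>R x i) - E a\<bar> \<le> real k * \<delta>) \<Longrightarrow>
    asym_game (\<lambda>x. C_equiv N (1 + \<epsilon>) (vec_norm N x) (\<lambda>a. E (\<lambda>i. if i < N then a i else 0))) r k x"
proof (induction r arbitrary: k x)
  case 0
  then have kN: "k = N" by simp
  have "C_equiv N (1 + \<epsilon>) (vec_norm N x) (\<lambda>a. E (\<lambda>i. if i < N then a i else 0))"
  proof (rule final_equiv[OF _ eps])
    fix i assume "i < N" then show "norm (x i) = 1" using 0(2) kN by auto
  next
    fix a assume "supp_in N a" "D a (\<lambda>_. 0) \<le> 1"
    then have "\<bar>V 0 a (\<Sum>i<N. a i *\<^sub>R x i) - E a\<bar> \<le> real N * \<delta>" using 0 kN by auto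
    moreover have "real N * \<delta> = (\<epsilon> / (2 + \<epsilon>)) / (2 * real N)" unfolding dd using Npos by simp
    ultimately show "\<bar>norm (\<Sum>i<N. a i *\<^sub>R x i) - E a\<bar> \<le> \<epsilon> / (2 + \<epsilon>) / (2 * real N)" by simp
  qed
  then show ?case by simp
next
  case (Suc r)
  have k: "k < N" using Suc.prems by simp
  have dpos: "0 < \<delta>" unfolding dd using eps Npos by simp
  have d1: "\<delta> \<le> 1"
  proof -
    have t: "\<epsilon> / (2 + \<epsilon>) \<le> 1" using eps by simp
    have N1: "1 \<le> real N" using Npos by simp
    have t0: "0 \<le> \<epsilon> / (2 + \<epsilon>)" using eps by simp
    have "\<epsilon> / (2 + \<epsilon>) / (2 * real N) \<le> \<epsilon> / (2 + \<epsilon>) / 1"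
      using N1 t0 by (intro divide_left_mono) auto
    then have a1: "\<epsilon> / (2 + \<epsilon>) / (2 * real N) \<le> 1" using t by simp
    have a0: "0 \<le> \<epsilon> / (2 + \<epsilon>) / (2 * real N)" using t0 N1 eps by (intro divide_nonneg_nonneg) auto
    have "\<epsilon> / (2 + \<epsilon>) / (2 * real N) / real N \<le> \<epsilon> / (2 + \<epsilon>) / (2 * real N) / 1"
      using N1 a0 by (intro divide_left_mono) auto
    then show ?thesis unfolding dd using a1 by simp
  qed
  show ?case
    unfolding asym_game.simps
  proof (intro allI impI)
    fix Z :: "'a set" assume Z: "fin_codim_closed_subspace Z"
    obtain v where vZ: "v \<in> Z" and nv: "norm v = 1" and
      vst: "\<forall>a. supp_in N a \<longrightarrow> D a (\<lambda>_. 0) \<le> 1 \<longrightarrow>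
        \<bar>V (N - Suc k) a ((\<Sum>i<k. a i *\<^sub>R x i) + a k *\<^sub>R v) - V (N - k) a (\<Sum>i<k. a i *\<^sub>R x i)\<bar> \<le> \<delta>"
      using game_step[OF k _ Z dpos d1, of x] Suc.prems(2) by blast
    have sum_upd: "(\<Sum>i<Suc k. a i *\<^sub>R (x(k := v)) i) = (\<Sum>i<k. a i *\<^sub>R x i) + a k *\<^sub>R v" for a
    proof -
      have "(\<Sum>i<k. a i *\<^sub>R (x(k := v)) i) = (\<Sum>i<k. a i *\<^sub>R x i)" by (intro sum.cong) auto
      then show ?thesis by simp
    qed
    have "asym_game (\<lambda>x. C_equiv N (1 + \<epsilon>) (vec_norm N x) (\<lambda>a. E (\<lambda>i. if i < N then a i else 0))) r (Suc k) (x(k := v))"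
    proof (rule Suc.IH)
      show "Suc k + r = N" using Suc.prems by simp
      show "\<forall>i<Suc k. norm ((x(k := v)) i) = 1" using Suc.prems(2) nv by (auto simp: less_Suc_eq)
      show "\<forall>a. supp_in N a \<longrightarrow> D a (\<lambda>_. 0) \<le> 1 \<longrightarrow>
          \<bar>V (N - Suc k) a (\<Sum>i<Suc k. a i *\<^sub>R (x(k := v)) i) - E a\<bar> \<le> real (Suc k) * \<delta>"
      proof (intro allI impI)
        fix a assume s: "supp_in N a" and D1: "D a (\<lambda>_. 0) \<le> 1"
        have e1: "\<bar>V (N - Suc k) a ((\<Sum>i<k. a i *\<^sub>R x i) + a k *\<^sub>R v) - V (N - k) a (\<Sum>i<k. a i *\<^sub>R x i)\<bar> \<le> \<delta>"
          using vst s D1 by blast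
        have e2: "\<bar>V (N - k) a (\<Sum>i<k. a i *\<^sub>R x i) - E a\<bar> \<le> real k * \<delta>" using Suc.prems(3) s D1 by blast
        show "\<bar>V (N - Suc k) a (\<Sum>i<Suc k. a i *\<^sub>R (x(k := v)) i) - E a\<bar> \<le> real (Suc k) * \<delta>"
          unfolding sum_upd using e1 e2 by (simp add: algebra_simps)
      qed
    qed
    then show "\<exists>v\<in>Z. norm v = 1 \<and> asym_game (\<lambda>x. C_equiv N (1 + \<epsilon>) (vec_norm N x) (\<lambda>a. E (\<lambda>i. if i < N then a i else 0))) r (Suc k) (x(k := v))"
      using vZ nv by blast
  qed
qed

lemma E_in_asym: "E \<in> asym_structure TYPE('a) N"
  unfolding asym_structure_def
proof (intro CollectI conjI allI impI)
  show "normalized_monotone_norm N E" by (rule E_nmn)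
next
  fix \<epsilon> :: real assume eps: "\<epsilon> > 0"
  show "asym_game (\<lambda>x::nat \<Rightarrow> 'a. C_equiv N (1 + \<epsilon>) (vec_norm N x) (\<lambda>a. E (\<lambda>i. if i < N then a i else 0))) N 0 (\<lambda>_. 0)"
    by (rule game_ind[OF eps refl]) (auto simp: E_def)
qed

end

context arr
begin

lemma small_pair_ind:
  assumes EC: "E w \<le> C"
  shows "k \<le> N \<Longrightarrow> \<exists>a b. strict_mono_on {..<k} a \<and> strict_mono_on {..<k} b \<and>
     (\<forall>i<k. a i = b i \<longleftrightarrow> w i = 0) \<and>
     V (N - k) w (\<Sum>i<k. w i *\<^sub>R yy i (a i)) < C + 1 \<and> V (N - k) w (\<Sum>i<k. w i *\<^sub>R yy i (b i)) < C + 1"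
proof (induction k)
  case 0
  have "V N w 0 < C + 1" using EC unfolding E_def by simp
  then show ?case by (intro exI[of _ "\<lambda>_. 0"]) (auto intro: strict_mono_onI)
next
  case (Suc k)
  have k: "k < N" using Suc.prems by simp
  then obtain a b where sa: "strict_mono_on {..<k} a" and sb: "strict_mono_on {..<k} b"
    and ab: "\<forall>i<k. a i = b i \<longleftrightarrow> w i = 0"
    and va: "V (N - k) w (\<Sum>i<k. w i *\<^sub>R yy i (a i)) < C + 1"
    and vb: "V (N - k) w (\<Sum>i<k. w i *\<^sub>R yy i (b i)) < C + 1"
    using Suc.IH by auto
  define j where "j = N - Suc k"
  have jk: "N - k = Suc j" "N - Suc j = k" using k unfolding j_def by auto
  define ua where "ua = (\<Sum>i<k. w i *\<^sub>R yy i (a i))"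
  define ub where "ub = (\<Sum>i<k. w i *\<^sub>R yy i (b i))"
  have ta: "((\<lambda>m. V j w (ua + w k *\<^sub>R yy k m)) \<longlongrightarrow> V (Suc j) w ua) F"
    using V_tendsto[of j w ua] unfolding jk .
  have tb: "((\<lambda>m. V j w (ub + w k *\<^sub>R yy k m)) \<longlongrightarrow> V (Suc j) w ub) F"
    using V_tendsto[of j w ub] unfolding jk .
  have eva: "eventually (\<lambda>m. V j w (ua + w k *\<^sub>R yy k m) < C + 1) F"
    using order_tendstoD(2)[OF ta] va unfolding ua_def jk by blast
  have evb: "eventually (\<lambda>m. V j w (ub + w k *\<^sub>R yy k m) < C + 1) F"
    using order_tendstoD(2)[OF tb] vb unfolding ub_def jk by blast
  define K where "K = (\<Sum>i<k. a i + b i)"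
  have aK: "a i \<le> K" "b i \<le> K" if "i < k" for i
  proof -
    have "a i + b i \<le> K" unfolding K_def using that by (intro member_le_sum) auto
    then show "a i \<le> K" "b i \<le> K" by auto
  qed
  obtain m1 where m1: "m1 > K" "V j w (ua + w k *\<^sub>R yy k m1) < C + 1" "V j w (ub + w k *\<^sub>R yy k m1) < C + 1"
    using ev_ex[OF eventually_conj[OF eva evb], of K] by blast
  obtain m2 where m2: "m2 \<ge> m1" "V j w (ub + w k *\<^sub>R yy k m2) < C + 1" "m2 = m1 \<longleftrightarrow> w k = 0"
  proof (cases "w k = 0")
    case True then show ?thesis using that m1 by blast
  next
    case False
    obtain m2 where "m2 > m1" "V j w (ub + w k *\<^sub>R yy k m2) < C + 1" using ev_ex[OF evb, of m1] by blast
    then have "m1 \<le> m2" "m2 \<noteq> m1" by auto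
    then show ?thesis using that[of m2] \<open>V j w (ub + w k *\<^sub>R yy k m2) < C + 1\<close> False by blast
  qed
  define a' where "a' = a(k := m1)"
  define b' where "b' = b(k := m2)"
  have sA: "strict_mono_on {..<Suc k} a'"
  proof (rule strict_mono_onI)
    fix r s assume "r \<in> {..<Suc k}" "s \<in> {..<Suc k}" "r < s"
    then have rs: "r < Suc k" "s < Suc k" "r < s" by auto
    show "a' r < a' s"
    proof (cases "s = k")
      case True
      then have "r < k" using rs by simp
      then have "a r \<le> K" using aK by blast
      then show ?thesis unfolding a'_def using True rs m1(1) by auto
    next
      case False
      then have "s < k" "r < k" using rs by auto
      then have "a r < a s" using strict_mono_onD[OF sa] rs by auto
      then show ?thesis unfolding a'_def using \<open>s < k\<close> \<open>r < k\<close> by auto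
    qed
  qed
  have sB: "strict_mono_on {..<Suc k} b'"
  proof (rule strict_mono_onI)
    fix r s assume "r \<in> {..<Suc k}" "s \<in> {..<Suc k}" "r < s"
    then have rs: "r < Suc k" "s < Suc k" "r < s" by auto
    show "b' r < b' s"
    proof (cases "s = k")
      case True
      then have "r < k" using rs by simp
      then have "b r \<le> K" using aK by blast
      then show ?thesis unfolding b'_def using True rs m1(1) m2(1) by auto
    next
      case False
      then have "s < k" "r < k" using rs by auto
      then have "b r < b s" using strict_mono_onD[OF sb] rs by auto
      then show ?thesis unfolding b'_def using \<open>s < k\<close> \<open>r < k\<close> by auto
    qed
  qed
  have eqAB: "\<forall>i<Suc k. a' i = b' i \<longleftrightarrow> w i = 0"
    using ab m2(3) unfolding a'_def b'_def by (auto simp: less_Suc_eq)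
  have sumA: "(\<Sum>i<Suc k. w i *\<^sub>R yy i (a' i)) = ua + w k *\<^sub>R yy k m1"
  proof -
    have "(\<Sum>i<k. w i *\<^sub>R yy i (a' i)) = ua" unfolding ua_def a'_def by (intro sum.cong) auto
    then show ?thesis unfolding a'_def by simp
  qed
  have sumB: "(\<Sum>i<Suc k. w i *\<^sub>R yy i (b' i)) = ub + w k *\<^sub>R yy k m2"
  proof -
    have "(\<Sum>i<k. w i *\<^sub>R yy i (b' i)) = ub" unfolding ub_def b'_def by (intro sum.cong) auto
    then show ?thesis unfolding b'_def by simp
  qed
  have vA: "V (N - Suc k) w (\<Sum>i<Suc k. w i *\<^sub>R yy i (a' i)) < C + 1"
    unfolding sumA j_def[symmetric] by (rule m1(2))
  have vB: "V (N - Suc k) w (\<Sum>i<Suc k. w i *\<^sub>R yy i (b' i)) < C + 1"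
    unfolding sumB j_def[symmetric] by (rule m2(2))
  show ?case using sA sB eqAB vA vB by blast
qed

end

lemma elem_of_image:
  assumes sm: "strict_mono_on {..<N} a" and i: "i < N"
  shows "elem_of (a ` {..<N}) i = a i"
proof -
  have sw: "sorted_wrt (<) (map a [0..<N])"
    unfolding sorted_wrt_iff_nth_less
  proof (intro allI impI)
    fix i j assume "i < j" "j < length (map a [0..<N])"
    then show "map a [0..<N] ! i < map a [0..<N] ! j" using strict_mono_onD[OF sm, of i j] by simp
  qed
  then have sd: "sorted (map a [0..<N])" "distinct (map a [0..<N])" using strict_sorted_iff by blast+
  have "a ` {..<N} = set (map a [0..<N])" by auto
  then have "sorted_list_of_set (a ` {..<N}) = sort (remdups (map a [0..<N]))"
    by (simp only: sorted_list_of_set_sort_remdups)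
  also have "\<dots> = map a [0..<N]" using sd by (simp add: distinct_remdups_id sorted_sort_id)
  finally show ?thesis unfolding elem_of_def using i by simp
qed

lemma sum_1N: "(\<Sum>i=1..N. g i) = (\<Sum>i<N. g (Suc i))"
  using sum.atLeast1_atMost_eq[of g N] by simp

lemma asym0_nonempty: "(\<lambda>a. 0) \<in> asym_structure TYPE('a::real_normed_vector) 0"
  unfolding asym_structure_def
proof (intro CollectI conjI allI impI)
  have z: "supp_in 0 a \<Longrightarrow> a = (\<lambda>_. 0)" for a unfolding supp_in_def by auto
  show "normalized_monotone_norm 0 (\<lambda>a. 0)"
    unfolding normalized_monotone_norm_def is_norm_on_def using z by simp
next
  fix \<epsilon> :: real assume "\<epsilon> > 0"
  have "C_equiv 0 (1 + \<epsilon>) (vec_norm 0 x) (\<lambda>a. 0)" for x :: "nat \<Rightarrow> 'a"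
    unfolding C_equiv_def vec_norm_def using \<open>\<epsilon> > 0\<close> by (intro exI[of _ 1]) simp
  then show "asym_game (\<lambda>x::nat \<Rightarrow> 'a. C_equiv 0 (1 + \<epsilon>) (vec_norm 0 x) (\<lambda>a. (\<lambda>a. 0) (\<lambda>i. if i < 0 then a i else 0))) 0 0 (\<lambda>_. 0)"
    by simp
qed

theorem proposition4p6:
  assumes "asymptotic_subsequential_c0 TYPE('a::banach)"
  shows "\<not> (\<exists>f :: nat \<Rightarrow> nat set \<Rightarrow> 'a.
            equi_coarse_embeddings f \<and>
            (\<forall>k\<ge>1. \<exists>y :: nat \<Rightarrow> nat \<Rightarrow> 'a.
                normalized_weakly_null_array k y \<and>
                (\<forall>A\<in>ksubsets k. f k A = (\<Sum>i=1..k. y i (elem_of A (i - 1))))))"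
proof
  assume "\<exists>f :: nat \<Rightarrow> nat set \<Rightarrow> 'a.
            equi_coarse_embeddings f \<and>
            (\<forall>k\<ge>1. \<exists>y :: nat \<Rightarrow> nat \<Rightarrow> 'a.
                normalized_weakly_null_array k y \<and>
                (\<forall>A\<in>ksubsets k. f k A = (\<Sum>i=1..k. y i (elem_of A (i - 1)))))"
  then obtain f :: "nat \<Rightarrow> nat set \<Rightarrow> 'a" where ec: "equi_coarse_embeddings f"
    and arrs: "\<forall>k\<ge>1. \<exists>y :: nat \<Rightarrow> nat \<Rightarrow> 'a. normalized_weakly_null_array k y \<and>
                (\<forall>A\<in>ksubsets k. f k A = (\<Sum>i=1..k. y i (elem_of A (i - 1))))" by blast
  obtain \<rho> \<omega> :: "real \<Rightarrow> real" where \<rho>lim: "filterlim \<rho> at_top at_top"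
    and bnds0: "\<forall>k\<ge>1. \<forall>A\<in>ksubsets k. \<forall>B\<in>ksubsets k.
            \<rho> (real (hamming_dist k A B)) \<le> norm (f k A - f k B) \<and>
            norm (f k A - f k B) \<le> \<omega> (real (hamming_dist k A B))"
    using ec unfolding equi_coarse_embeddings_def by (elim exE conjE) (rule that)
  have bnds: "\<rho> (real (hamming_dist k A B)) \<le> norm (f k A - f k B)"
    if "k \<ge> 1" "A \<in> ksubsets k" "B \<in> ksubsets k" for k A B
    using bnds0 that by blast
  obtain C where C1: "C \<ge> 1" and H: "\<forall>n. \<exists>N. \<forall>E \<in> asym_structure TYPE('a) N.
        \<exists>idx::nat \<Rightarrow> nat. strict_mono_on {..<n} idx \<and> (\<forall>k<n. idx k < N) \<and>
          C_equiv n C (\<lambda>a. E (\<lambda>j. \<Sum>k<n. if j = idx k then a k else 0)) (sup_norm n)"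
    using assms unfolding asymptotic_subsequential_c0_def by blast
  have "eventually (\<lambda>t. 2 * C + 3 \<le> \<rho> t) at_top" using \<rho>lim unfolding filterlim_at_top by blast
  then obtain T where T: "\<And>t. t \<ge> T \<Longrightarrow> 2 * C + 3 \<le> \<rho> t" unfolding eventually_at_top_linorder by blast
  define n where "n = nat \<lceil>max T 1\<rceil>"
  have n1: "n \<ge> 1" unfolding n_def by linarith
  have nT: "real n \<ge> T" unfolding n_def by linarith
  have \<rho>n: "2 * C + 3 \<le> \<rho> (real n)" using T nT by blast
  obtain N where HN: "\<forall>E \<in> asym_structure TYPE('a) N.
        \<exists>idx::nat \<Rightarrow> nat. strict_mono_on {..<n} idx \<and> (\<forall>k<n. idx k < N) \<and>
          C_equiv n C (\<lambda>a. E (\<lambda>j. \<Sum>k<n. if j = idx k then a k else 0)) (sup_norm n)"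
    using H by blast
  have Npos: "N > 0"
  proof (rule ccontr)
    assume "\<not> N > 0"
    then have "N = 0" by simp
    then have "(\<lambda>a. 0) \<in> asym_structure TYPE('a) N" using asym0_nonempty[where 'a='a] by simp
    from HN[rule_format, OF this] obtain idx :: "nat \<Rightarrow> nat" where "\<forall>k<n. idx k < N" by blast
    then have "idx 0 < N" using n1 by simp
    then show False using \<open>N = 0\<close> by simp
  qed
  obtain y :: "nat \<Rightarrow> nat \<Rightarrow> 'a" where ya: "normalized_weakly_null_array N y"
    and fN: "\<forall>A\<in>ksubsets N. f N A = (\<Sum>i=1..N. y i (elem_of A (i - 1)))"
  proof -
    have "N \<ge> 1" using Npos by simp
    from arrs[rule_format, OF this] show ?thesis using that by blast
  qed
  define yy where "yy i m = y (Suc i) m" for i m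
  obtain F :: "nat filter" where Fnb: "F \<noteq> bot" and Fseq: "F \<le> sequentially"
    and Fu: "\<forall>P. eventually P F \<or> eventually (\<lambda>x. \<not> P x) F"
    using ultrafilter_exists by blast
  interpret A: arr F N yy
  proof unfold_locales
    show "F \<noteq> bot" by (rule Fnb)
    show "F \<le> sequentially" by (rule Fseq)
    show "eventually P F \<or> eventually (\<lambda>x. \<not> P x) F" for P using Fu by blast
    show "N > 0" by (rule Npos)
    show "norm (yy i m) = 1" if "i < N" for i m
      using ya that unfolding normalized_weakly_null_array_def yy_def by auto
    show "weakly_null (yy i)" if "i < N" for i
    proof -
      have "weakly_null (y (Suc i))" using ya that unfolding normalized_weakly_null_array_def by auto
      moreover have "yy i = y (Suc i)" unfolding yy_def by auto
      ultimately show ?thesis by simp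
    qed
  qed
  obtain idx where sidx: "strict_mono_on {..<n} idx" and idxN: "\<forall>k<n. idx k < N"
    and ceq: "C_equiv n C (\<lambda>a. A.E (\<lambda>j. \<Sum>k<n. if j = idx k then a k else 0)) (sup_norm n)"
    using HN[rule_format, OF A.E_in_asym] by blast
  obtain A0 B0 where A0: "A0 > 0" and B0: "B0 > 0" and AB: "A0 * B0 \<le> C"
    and ceq2: "\<And>a::nat \<Rightarrow> real.
      (1 / A0) * A.E (\<lambda>j. \<Sum>k<n. if j = idx k then (if k < n then a k else 0) else 0) \<le> sup_norm n (\<lambda>i. if i < n then a i else 0) \<and>
      sup_norm n (\<lambda>i. if i < n then a i else 0) \<le> B0 * A.E (\<lambda>j. \<Sum>k<n. if j = idx k then (if k < n then a k else 0) else 0)"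
    using ceq unfolding C_equiv_def by blast
  define a1 :: "nat \<Rightarrow> real" where "a1 k = (if k = 0 then 1 else 0)" for k
  have unit_eq: "(\<lambda>j. \<Sum>k<n. if j = idx k then (if k < n then a1 k else 0) else 0) = unit_vec (idx 0)"
  proof
    fix j
    have "(\<Sum>k<n. if j = idx k then (if k < n then a1 k else 0) else 0) = (\<Sum>k<n. if k = 0 then (if j = idx 0 then 1 else 0) else 0)"
      by (intro sum.cong) (auto simp: a1_def)
    also have "\<dots> = (if j = idx 0 then 1 else 0)" using n1 by simp
    finally show "(\<Sum>k<n. if j = idx k then (if k < n then a1 k else 0) else 0) = unit_vec (idx 0) j"
      unfolding unit_vec_def by simp
  qed
  have sup1: "sup_norm n (\<lambda>i. if i < n then a1 i else 0) = 1"
  proof -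
    have "Max ((\<lambda>i. \<bar>if i < n then a1 i else 0\<bar>) ` {..<n}) = 1"
    proof (rule Max_eqI)
      show "finite ((\<lambda>i. \<bar>if i < n then a1 i else 0\<bar>) ` {..<n})" by simp
      show "y \<le> 1" if "y \<in> (\<lambda>i. \<bar>if i < n then a1 i else 0\<bar>) ` {..<n}" for y
        using that unfolding a1_def by auto
      show "1 \<in> (\<lambda>i. \<bar>if i < n then a1 i else 0\<bar>) ` {..<n}"
        using n1 unfolding a1_def by (intro image_eqI[where x=0]) auto
    qed
    then show ?thesis unfolding sup_norm_def using n1 by simp
  qed
  have "1 \<le> B0 * 1"
    using ceq2[of a1] unfolding unit_eq sup1 using A.E_unit[of "idx 0"] idxN n1 by simp
  then have "A0 * 1 \<le> A0 * B0" using A0 by (intro mult_left_mono) auto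
  then have A0C: "A0 \<le> C" using AB by simp
  define w where "w j = (\<Sum>k<n. if j = idx k then (if k < n then (1::real) else 0) else 0)" for j
  define J where "J = idx ` {..<n}"
  have injidx: "inj_on idx {..<n}" using sidx by (rule strict_mono_on_imp_inj_on)
  have w_eq: "w j = (if j \<in> J then 1 else 0)" for j
  proof (cases "j \<in> J")
    case True
    then obtain k0 where k0: "k0 < n" "j = idx k0" unfolding J_def by blast
    have "w j = (\<Sum>k<n. if k = k0 then 1 else 0)"
      unfolding w_def using k0 injidx by (intro sum.cong) (auto simp: inj_on_def)
    also have "\<dots> = 1" using k0 by simp
    finally show ?thesis using True by simp
  next
    case False
    then have "w j = 0" unfolding w_def J_def by (intro sum.neutral) auto
    then show ?thesis using False by simp
  qed
  have sup2: "sup_norm n (\<lambda>i. if i < n then (\<lambda>_. 1::real) i else 0) = 1"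
  proof -
    have "(\<lambda>i. \<bar>if i < n then (\<lambda>_. 1::real) i else 0\<bar>) ` {..<n} = {1}"
    proof
      show "(\<lambda>i. \<bar>if i < n then (\<lambda>_. 1::real) i else 0\<bar>) ` {..<n} \<subseteq> {1}" by auto
      show "{1} \<subseteq> (\<lambda>i. \<bar>if i < n then (\<lambda>_. 1::real) i else 0\<bar>) ` {..<n}"
      proof
        fix x :: real assume "x \<in> {1}"
        then have x1: "x = 1" by simp
        have "(0::nat) \<in> {..<n}" "x = (\<lambda>i. \<bar>if i < n then (\<lambda>_. 1::real) i else 0\<bar>) 0" using n1 x1 by auto
        then show "x \<in> (\<lambda>i. \<bar>if i < n then (\<lambda>_. 1::real) i else 0\<bar>) ` {..<n}" by (rule rev_image_eqI)
      qed
    qed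
    then show ?thesis unfolding sup_norm_def using n1 by simp
  qed
  have "(1 / A0) * A.E w \<le> 1"
    using ceq2[of "\<lambda>_. 1"] unfolding sup2 w_def[abs_def] by simp
  then have Ew: "A.E w \<le> C" using A0 A0C by (simp add: field_simps)
  obtain a b where sa: "strict_mono_on {..<N} a" and sb: "strict_mono_on {..<N} b"
    and ab: "\<forall>i<N. a i = b i \<longleftrightarrow> w i = 0"
    and va: "A.V (N - N) w (\<Sum>i<N. w i *\<^sub>R yy i (a i)) < C + 1"
    and vb: "A.V (N - N) w (\<Sum>i<N. w i *\<^sub>R yy i (b i)) < C + 1"
    using A.small_pair_ind[OF Ew, of N] by blast
  have na: "norm (\<Sum>i<N. w i *\<^sub>R yy i (a i)) < C + 1" using va by simp
  have nb: "norm (\<Sum>i<N. w i *\<^sub>R yy i (b i)) < C + 1" using vb by simp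
  define SA where "SA = a ` {..<N}"
  define SB where "SB = b ` {..<N}"
  have SAk: "SA \<in> ksubsets N" unfolding SA_def ksubsets_def
    using card_image[OF strict_mono_on_imp_inj_on[OF sa]] by simp
  have SBk: "SB \<in> ksubsets N" unfolding SB_def ksubsets_def
    using card_image[OF strict_mono_on_imp_inj_on[OF sb]] by simp
  have eA: "elem_of SA i = a i" if "i < N" for i unfolding SA_def using elem_of_image[OF sa that] .
  have eB: "elem_of SB i = b i" if "i < N" for i unfolding SB_def using elem_of_image[OF sb that] .
  have fA: "f N SA = (\<Sum>i<N. yy i (a i))"
    using fN SAk unfolding sum_1N yy_def by (simp add: eA)
  have fB: "f N SB = (\<Sum>i<N. yy i (b i))"
    using fN SBk unfolding sum_1N yy_def by (simp add: eB)
  have diff: "f N SA - f N SB = (\<Sum>i<N. w i *\<^sub>R yy i (a i)) - (\<Sum>i<N. w i *\<^sub>R yy i (b i))"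
  proof -
    have "f N SA - f N SB = (\<Sum>i<N. yy i (a i) - yy i (b i))" unfolding fA fB by (simp add: sum_subtractf)
    also have "\<dots> = (\<Sum>i<N. w i *\<^sub>R yy i (a i) - w i *\<^sub>R yy i (b i))"
    proof (rule sum.cong)
      fix i assume "i \<in> {..<N}"
      then show "yy i (a i) - yy i (b i) = w i *\<^sub>R yy i (a i) - w i *\<^sub>R yy i (b i)"
        using ab w_eq[of i] by (cases "i \<in> J") auto
    qed simp
    finally show ?thesis by (simp add: sum_subtractf)
  qed
  have nd: "norm (f N SA - f N SB) < 2 * C + 2"
    unfolding diff using norm_triangle_ineq4[of "\<Sum>i<N. w i *\<^sub>R yy i (a i)" "\<Sum>i<N. w i *\<^sub>R yy i (b i)"] na nb
    by linarith
  have JN: "J \<subseteq> {..<N}" unfolding J_def using idxN by auto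
  have hd: "hamming_dist N SA SB = n"
  proof -
    have "{j. j < N \<and> elem_of SA j \<noteq> elem_of SB j} = J"
    proof (rule set_eqI)
      fix j
      show "j \<in> {j. j < N \<and> elem_of SA j \<noteq> elem_of SB j} \<longleftrightarrow> j \<in> J"
      proof (cases "j < N")
        case True
        have "a j = b j \<longleftrightarrow> w j = 0" using ab True by blast
        then show ?thesis using eA[OF True] eB[OF True] w_eq[of j] True by (cases "j \<in> J") auto
      next
        case False
        then have "j \<notin> J" using JN by auto
        then show ?thesis using False by simp
      qed
    qed
    then have "hamming_dist N SA SB = card J" unfolding hamming_dist_def by simp
    also have "card J = n" unfolding J_def using card_image[OF injidx] by simp
    finally show ?thesis .
  qed
  have N1: "N \<ge> 1" using Npos by simp
  have "\<rho> (real (hamming_dist N SA SB)) \<le> norm (f N SA - f N SB)"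
    using bnds[OF N1 SAk SBk] .
  then have "\<rho> (real n) \<le> norm (f N SA - f N SB)" unfolding hd .
  then show False using \<rho>n nd by linarith
qed

end
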